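(* For every $k\in\mathbb Z$ there is an isomorphism of (strict) monoidal categories $\omega:\mathcal{H}eis_k\to(\mathcal{H}eis_{-k})^{\mathrm{op}}$ which interchanges the objects $\uparrow$ and $\downarrow$ and is defined on generating morphisms by $x\mapsto x'$, $s\mapsto -s'$, $c\mapsto d$ and $d\mapsto c$, where $x',s'$ (and the $c,d$ on the right) denote the morphisms of $\mathcal{H}eis_{-k}$ defined in the context.
   Context: Fix a commutative ring $\Bbbk$. For an integer $m$, the Heisenberg category $\mathcal{H}eis_m$ is the strict $\Bbbk$-linear monoidal category generated by objects $\uparrow,\downarrow$ and morphisms $x:\uparrow\to\uparrow$, $s:\uparrow\otimes\uparrow\to\uparrow\otimes\uparrow$, $c:\mathbf 1\to\downarrow\otimes\uparrow$, $d:\uparrow\otimes\downarrow\to\mathbf 1$ ($\mathbf 1$ the unit object, $1_X$ identities, $\circ$ composition, $x^n$ the $n$-fold composite), subject to the following relations, where $t:=(1_\downarrow\otimes 1_\uparrow\otimes d)\circ(1_\downarrow\otimes s\otimes 1_\downarrow)\circ(c\otimes 1_\uparrow\otimes 1_\downarrow):\uparrow\otimes\downarrow\to\downarrow\otimes\uparrow$: (H) $s\circ s=1_{\uparrow\otimes\uparrow}$; $(s\otimes 1_\uparrow)\circ(1_\uparrow\otimes s)\circ(s\otimes 1_\uparrow)=(1_\uparrow\otimes s)\circ(s\otimes 1_\uparrow)\circ(1_\uparrow\otimes s)$; $(x\otimes 1_\uparrow)\circ s-s\circ(1_\uparrow\otimes x)=1_{\uparrow\otimes\uparrow}$. (A)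 $(d\otimes 1_\uparrow)\circ(1_\uparrow\otimes c)=1_\uparrow$ and $(1_\downarrow\otimes d)\circ(c\otimes 1_\downarrow)=1_\downarrow$. (I) If $m\ge0$, the morphism $\uparrow\otimes\downarrow\to(\downarrow\otimes\uparrow)\oplus\mathbf 1^{\oplus m}$ with components $t$ and $d\circ(x^r\otimes 1_\downarrow)$, $r=0,\dots,m-1$, is an isomorphism in the additive envelope; if $m<0$, the morphism $(\uparrow\otimes\downarrow)\oplus\mathbf 1^{\oplus(-m)}\to\downarrow\otimes\uparrow$ with components $t$ and $(1_\downarrow\otimes x^r)\circ c$, $r=0,\dots,-m-1$, is an isomorphism in the additive envelope (formally, the entries of a two-sided inverse matrix are adjoined as generators). In $\mathcal{H}eis_m$ define $x':=(1_\downarrow\otimes d)\circ(1_\downarrow\otimes x\otimes 1_\downarrow)\circ(c\otimes 1_\downarrow):\downarrow\to\downarrow$ and $s':=(1_\downarrow\otimes 1_\downarrow\otimes d)\circ(1_\downarrow\otimes t\otimes 1_\downarrow)\circ(c\otimes 1_\downarrow\otimes 1_\downarrow):\downarrow\otimes\downarrow\to\downarrow\otimes\downarrow$ (the right mates of $x$ and $s$). $\mathcal C^{\mathrm{op}}$ denotes the opposite category with the same tensor product. *)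

theory Defs
  imports Main
begin

text \<open>
  Objects: words in up/down, encoded as bool lists (True = up, False = down);
  tensor product of objects is list append, the unit object is [].
  Morphism terms: formal expressions built from identities, the generators
  x, s, c, d, the generators adjoined for the inversion relation (I)
  (Gu and Gv r, the entries of the two-sided inverse matrix), composition
  (Comp f g = f after g), tensor product, zero, sum and scalar multiplication.
  The morphisms of Heis_m from a to b are the well-typed terms modulo the
  congruence heq m generated by the axioms of a strict k-linear monoidal category
  and the relations (H), (A), (I).
\<close>

type_synonym obj = "bool list"

datatype 'k mor =
    Id obj | Gx | Gs | Gc | Gd | Gu | Gv nat
  | Comp "'k mor" "'k mor" | Tens "'k mor" "'k mor"
  | Zer obj obj | Add "'k mor" "'k mor" | Smul 'k "'k mor"

text \<open>For m \<ge> 0 the inverse of the column (t ; d(x^r\<otimes>1)) : \<up>\<down> \<rightarrow> \<down>\<up> \<oplus> 1^m is the row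
  (Gu, Gv 0, ..., Gv (m-1)) with Gu : \<down>\<up> \<rightarrow> \<up>\<down>, Gv r : 1 \<rightarrow> \<up>\<down>.
  For m < 0 the inverse of the row (t, (1\<otimes>x^r)c) : \<up>\<down> \<oplus> 1^(-m) \<rightarrow> \<down>\<up> is the column
  (Gu ; Gv 0 ; ... ; Gv (-m-1)) with Gu : \<down>\<up> \<rightarrow> \<up>\<down>, Gv r : \<down>\<up> \<rightarrow> 1.\<close>

inductive hty :: "int \<Rightarrow> 'k mor \<Rightarrow> obj \<Rightarrow> obj \<Rightarrow> bool" for m :: int where
  ty_id: "hty m (Id a) a a"
| ty_x: "hty m Gx [True] [True]"
| ty_s: "hty m Gs [True,True] [True,True]"
| ty_c: "hty m Gc [] [False,True]"
| ty_d: "hty m Gd [True,False] []"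
| ty_u: "hty m Gu [False,True] [True,False]"
| ty_v_pos: "0 \<le> m \<Longrightarrow> int r < m \<Longrightarrow> hty m (Gv r) [] [True,False]"
| ty_v_neg: "m < 0 \<Longrightarrow> int r < - m \<Longrightarrow> hty m (Gv r) [False,True] []"
| ty_comp: "hty m f b c \<Longrightarrow> hty m g a b \<Longrightarrow> hty m (Comp f g) a c"
| ty_tens: "hty m f a b \<Longrightarrow> hty m g c d \<Longrightarrow> hty m (Tens f g) (a @ c) (b @ d)"
| ty_zer: "hty m (Zer a b) a b"
| ty_add: "hty m f a b \<Longrightarrow> hty m g a b \<Longrightarrow> hty m (Add f g) a b"
| ty_smul: "hty m f a b \<Longrightarrow> hty m (Smul r f) a b"

fun xpow :: "nat \<Rightarrow> 'k mor" where
  "xpow 0 = Id [True]"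
| "xpow (Suc n) = Comp Gx (xpow n)"

definition tmor :: "'k mor" where
  "tmor = Comp (Tens (Id [False,True]) Gd)
            (Comp (Tens (Id [False]) (Tens Gs (Id [False])))
                  (Tens Gc (Id [True,False])))"

definition dx :: "nat \<Rightarrow> 'k mor" where
  "dx r = Comp Gd (Tens (xpow r) (Id [False]))"

definition cx :: "nat \<Rightarrow> 'k mor" where
  "cx r = Comp (Tens (Id [False]) (xpow r)) Gc"

definition msum :: "obj \<Rightarrow> obj \<Rightarrow> 'k mor list \<Rightarrow> 'k mor" where
  "msum a b fs = foldr Add fs (Zer a b)"

text \<open>x' : \<down> \<rightarrow> \<down> and s' : \<down>\<down> \<rightarrow> \<down>\<down> (right mates of x and s)\<close>
definition xprime :: "'k mor" where
  "xprime = Comp (Tens (Id [False]) Gd)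
             (Comp (Tens (Id [False]) (Tens Gx (Id [False])))
                   (Tens Gc (Id [False])))"

definition sprime :: "'k mor" where
  "sprime = Comp (Tens (Id [False,False]) Gd)
             (Comp (Tens (Id [False]) (Tens tmor (Id [False])))
                   (Tens Gc (Id [False,False])))"

inductive heq :: "int \<Rightarrow> 'k::comm_ring_1 mor \<Rightarrow> 'k mor \<Rightarrow> bool" for m :: int where
  eq_refl: "hty m f a b \<Longrightarrow> heq m f f"
| eq_sym: "heq m f g \<Longrightarrow> heq m g f"
| eq_trans: "heq m f g \<Longrightarrow> heq m g h \<Longrightarrow> heq m f h"
| cong_comp: "heq m f f' \<Longrightarrow> heq m g g' \<Longrightarrow> hty m f b c \<Longrightarrow> hty m g a b
     \<Longrightarrow> heq m (Comp f g) (Comp f' g')"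
| cong_tens: "heq m f f' \<Longrightarrow> heq m g g' \<Longrightarrow> heq m (Tens f g) (Tens f' g')"
| cong_add: "heq m f f' \<Longrightarrow> heq m g g' \<Longrightarrow> hty m f a b \<Longrightarrow> hty m g a b
     \<Longrightarrow> heq m (Add f g) (Add f' g')"
| cong_smul: "heq m f f' \<Longrightarrow> heq m (Smul r f) (Smul r f')"
| comp_assoc: "hty m f c d \<Longrightarrow> hty m g b c \<Longrightarrow> hty m h a b
     \<Longrightarrow> heq m (Comp (Comp f g) h) (Comp f (Comp g h))"
| comp_idl: "hty m f a b \<Longrightarrow> heq m (Comp (Id b) f) f"
| comp_idr: "hty m f a b \<Longrightarrow> heq m (Comp f (Id a)) f"
| tens_assoc: "hty m f a b \<Longrightarrow> hty m g c d \<Longrightarrow> hty m h e p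
     \<Longrightarrow> heq m (Tens (Tens f g) h) (Tens f (Tens g h))"
| tens_unitl: "hty m f a b \<Longrightarrow> heq m (Tens (Id []) f) f"
| tens_unitr: "hty m f a b \<Longrightarrow> heq m (Tens f (Id [])) f"
| tens_id: "heq m (Tens (Id a) (Id b)) (Id (a @ b))"
| interchange: "hty m f a b \<Longrightarrow> hty m g b c \<Longrightarrow> hty m h d e \<Longrightarrow> hty m k e p
     \<Longrightarrow> heq m (Comp (Tens g k) (Tens f h)) (Tens (Comp g f) (Comp k h))"
| add_assoc: "hty m f a b \<Longrightarrow> hty m g a b \<Longrightarrow> hty m h a b
     \<Longrightarrow> heq m (Add (Add f g) h) (Add f (Add g h))"
| add_comm: "hty m f a b \<Longrightarrow> hty m g a b \<Longrightarrow> heq m (Add f g) (Add g f)"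
| add_zero: "hty m f a b \<Longrightarrow> heq m (Add f (Zer a b)) f"
| add_neg: "hty m f a b \<Longrightarrow> heq m (Add f (Smul (-1) f)) (Zer a b)"
| smul_add: "hty m f a b \<Longrightarrow> hty m g a b
     \<Longrightarrow> heq m (Smul r (Add f g)) (Add (Smul r f) (Smul r g))"
| add_smul: "hty m f a b \<Longrightarrow> heq m (Smul (r + q) f) (Add (Smul r f) (Smul q f))"
| smul_smul: "hty m f a b \<Longrightarrow> heq m (Smul r (Smul q f)) (Smul (r * q) f)"
| smul_one: "hty m f a b \<Longrightarrow> heq m (Smul 1 f) f"
| comp_addl: "hty m f b c \<Longrightarrow> hty m g b c \<Longrightarrow> hty m h a b
     \<Longrightarrow> heq m (Comp (Add f g) h) (Add (Comp f h) (Comp g h))"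
| comp_addr: "hty m f b c \<Longrightarrow> hty m g a b \<Longrightarrow> hty m h a b
     \<Longrightarrow> heq m (Comp f (Add g h)) (Add (Comp f g) (Comp f h))"
| comp_smull: "hty m f b c \<Longrightarrow> hty m g a b \<Longrightarrow> heq m (Comp (Smul r f) g) (Smul r (Comp f g))"
| comp_smulr: "hty m f b c \<Longrightarrow> hty m g a b \<Longrightarrow> heq m (Comp f (Smul r g)) (Smul r (Comp f g))"
| tens_addl: "hty m f a b \<Longrightarrow> hty m g a b \<Longrightarrow> hty m h c d
     \<Longrightarrow> heq m (Tens (Add f g) h) (Add (Tens f h) (Tens g h))"
| tens_addr: "hty m f a b \<Longrightarrow> hty m g c d \<Longrightarrow> hty m h c d
     \<Longrightarrow> heq m (Tens f (Add g h)) (Add (Tens f g) (Tens f h))"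
| tens_smull: "hty m f a b \<Longrightarrow> hty m g c d \<Longrightarrow> heq m (Tens (Smul r f) g) (Smul r (Tens f g))"
| tens_smulr: "hty m f a b \<Longrightarrow> hty m g c d \<Longrightarrow> heq m (Tens f (Smul r g)) (Smul r (Tens f g))"
| H_ss: "heq m (Comp Gs Gs) (Id [True,True])"
| H_braid: "heq m (Comp (Tens Gs (Id [True])) (Comp (Tens (Id [True]) Gs) (Tens Gs (Id [True]))))
                  (Comp (Tens (Id [True]) Gs) (Comp (Tens Gs (Id [True])) (Tens (Id [True]) Gs)))"
| H_dot: "heq m (Add (Comp (Tens Gx (Id [True])) Gs) (Smul (-1) (Comp Gs (Tens (Id [True]) Gx))))
                (Id [True,True])"
| A_up: "heq m (Comp (Tens Gd (Id [True])) (Tens (Id [True]) Gc)) (Id [True])"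
| A_down: "heq m (Comp (Tens (Id [False]) Gd) (Tens Gc (Id [False]))) (Id [False])"
  \<comment> \<open>relations (I), m \<ge> 0: (Gu, Gv 0..m-1) is a two-sided inverse of (t ; dx 0..m-1)\<close>
| I_pos1: "0 \<le> m \<Longrightarrow> heq m (Add (Comp Gu tmor)
              (msum [True,False] [True,False] (map (\<lambda>r. Comp (Gv r) (dx r)) [0..<nat m])))
            (Id [True,False])"
| I_pos2: "0 \<le> m \<Longrightarrow> heq m (Comp tmor Gu) (Id [False,True])"
| I_pos3: "0 \<le> m \<Longrightarrow> int r < m \<Longrightarrow> heq m (Comp tmor (Gv r)) (Zer [] [False,True])"
| I_pos4: "0 \<le> m \<Longrightarrow> int r < m \<Longrightarrow> heq m (Comp (dx r) Gu) (Zer [False,True] [])"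
| I_pos5: "0 \<le> m \<Longrightarrow> int r < m \<Longrightarrow> int q < m
     \<Longrightarrow> heq m (Comp (dx r) (Gv q)) (if r = q then Id [] else Zer [] [])"
  \<comment> \<open>relations (I), m < 0: (Gu ; Gv 0..-m-1) is a two-sided inverse of (t, cx 0..-m-1)\<close>
| I_neg1: "m < 0 \<Longrightarrow> heq m (Add (Comp tmor Gu)
              (msum [False,True] [False,True] (map (\<lambda>r. Comp (cx r) (Gv r)) [0..<nat (- m)])))
            (Id [False,True])"
| I_neg2: "m < 0 \<Longrightarrow> heq m (Comp Gu tmor) (Id [True,False])"
| I_neg3: "m < 0 \<Longrightarrow> int r < - m \<Longrightarrow> heq m (Comp Gu (cx r)) (Zer [] [True,False])"
| I_neg4: "m < 0 \<Longrightarrow> int r < - m \<Longrightarrow> heq m (Comp (Gv r) tmor) (Zer [True,False] [])"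
| I_neg5: "m < 0 \<Longrightarrow> int r < - m \<Longrightarrow> int q < - m
     \<Longrightarrow> heq m (Comp (Gv r) (cx q)) (if r = q then Id [] else Zer [] [])"

definition swap_obj :: "obj \<Rightarrow> obj" where
  "swap_obj a = map Not a"

text \<open>w induces a strict monoidal k-linear functor Heis_k \<rightarrow> (Heis_l)^op whose object
  map is swap_obj (which is bijective and strict monoidal: swap_obj (a@b) = swap_obj a @ swap_obj b),
  and this functor is an isomorphism of categories, i.e. additionally bijective on
  each hom-set (faithful and full).\<close>
definition heis_op_iso :: "int \<Rightarrow> int \<Rightarrow> ('k::comm_ring_1 mor \<Rightarrow> 'k mor) \<Rightarrow> bool" where
  "heis_op_iso k l w \<longleftrightarrow>
     (\<forall>f a b. hty k f a b \<longrightarrow> hty l (w f) (swap_obj b) (swap_obj a))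
   \<and> (\<forall>f g. heq k f g \<longrightarrow> heq l (w f) (w g))
   \<and> (\<forall>a. heq l (w (Id a)) (Id (swap_obj a)))
   \<and> (\<forall>f g a b c. hty k f b c \<longrightarrow> hty k g a b \<longrightarrow> heq l (w (Comp f g)) (Comp (w g) (w f)))
   \<and> (\<forall>f g a b c d. hty k f a b \<longrightarrow> hty k g c d \<longrightarrow> heq l (w (Tens f g)) (Tens (w f) (w g)))
   \<and> (\<forall>f g a b. hty k f a b \<longrightarrow> hty k g a b \<longrightarrow> heq l (w (Add f g)) (Add (w f) (w g)))
   \<and> (\<forall>f r a b. hty k f a b \<longrightarrow> heq l (w (Smul r f)) (Smul r (w f)))
   \<and> (\<forall>f g a b. hty k f a b \<longrightarrow> hty k g a b \<longrightarrow> heq l (w f) (w g) \<longrightarrow> heq k f g)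
   \<and> (\<forall>h a b. hty l h (swap_obj b) (swap_obj a) \<longrightarrow> (\<exists>f. hty k f a b \<and> heq l (w f) h))"

end

theory Submission
  imports Defs
begin


fun tcomp :: "(obj \<times> obj) option \<Rightarrow> (obj \<times> obj) option \<Rightarrow> (obj \<times> obj) option" where
  "tcomp (Some (b, c)) (Some (a, b')) = (if b = b' then Some (a, c) else None)"
| "tcomp _ _ = None"

fun ttens :: "(obj \<times> obj) option \<Rightarrow> (obj \<times> obj) option \<Rightarrow> (obj \<times> obj) option" where
  "ttens (Some (a, b)) (Some (c, d)) = Some (a @ c, b @ d)"
| "ttens _ _ = None"

fun tadd :: "(obj \<times> obj) option \<Rightarrow> (obj \<times> obj) option \<Rightarrow> (obj \<times> obj) option" where
  "tadd (Some t) (Some t') = (if t = t' then Some t else None)"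
| "tadd _ _ = None"

fun ty :: "int \<Rightarrow> 'k mor \<Rightarrow> (obj \<times> obj) option" where
  "ty m (Id a) = Some (a, a)"
| "ty m Gx = Some ([True], [True])"
| "ty m Gs = Some ([True,True], [True,True])"
| "ty m Gc = Some ([], [False,True])"
| "ty m Gd = Some ([True,False], [])"
| "ty m Gu = Some ([False,True], [True,False])"
| "ty m (Gv r) = (if 0 \<le> m \<and> int r < m then Some ([], [True,False])
                  else if m < 0 \<and> int r < - m then Some ([False,True], []) else None)"
| "ty m (Comp f g) = tcomp (ty m f) (ty m g)"
| "ty m (Tens f g) = ttens (ty m f) (ty m g)"
| "ty m (Zer a b) = Some (a, b)"
| "ty m (Add f g) = tadd (ty m f) (ty m g)"
| "ty m (Smul r f) = ty m f"

lemma tcomp_Some: "tcomp x y = Some (a, c) \<longleftrightarrow> (\<exists>b. x = Some (b, c) \<and> y = Some (a, b))"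
  by (cases x; cases y) (auto split: if_splits)
lemma ttens_Some: "ttens x y = Some (a, b) \<longleftrightarrow>
   (\<exists>a1 a2 b1 b2. x = Some (a1, b1) \<and> y = Some (a2, b2) \<and> a = a1 @ a2 \<and> b = b1 @ b2)"
  by (cases x; cases y) auto
lemma tadd_Some: "tadd x y = Some t \<longleftrightarrow> x = Some t \<and> y = Some t"
  by (cases x; cases y) auto

lemma hty_ty: "hty m f a b \<longleftrightarrow> ty m f = Some (a, b)"
proof
  assume "hty m f a b" then show "ty m f = Some (a, b)"
    by induction auto
next
  show "ty m f = Some (a, b) \<Longrightarrow> hty m f a b"
  proof (induction f arbitrary: a b)
    case (Gv r) then show ?case by (auto split: if_splits intro: hty.intros)
  next
    case (Comp f g) then show ?case by (auto simp: tcomp_Some intro: hty.intros)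
  next
    case (Tens f g) then show ?case by (auto simp: ttens_Some intro: hty.intros)
  next
    case (Add f g) then show ?case by (auto simp: tadd_Some intro: hty.intros)
  qed (auto intro: hty.intros)
qed

lemma ty_xpow[simp]: "ty m (xpow n) = Some ([True],[True])"
  by (induction n) auto

lemma ty_tmor[simp]: "ty m tmor = Some ([True,False],[False,True])"
  by (simp add: tmor_def)
lemma ty_dx[simp]: "ty m (dx r) = Some ([True,False],[])"
  by (simp add: dx_def)
lemma ty_cx[simp]: "ty m (cx r) = Some ([],[False,True])"
  by (simp add: cx_def)
lemma ty_xprime[simp]: "ty m xprime = Some ([False],[False])"
  by (simp add: xprime_def)
lemma ty_sprime[simp]: "ty m sprime = Some ([False,False],[False,False])"
  by (simp add: sprime_def)

lemma ty_msum: "(\<forall>f\<in>set fs. ty m f = Some (a, b)) \<Longrightarrow> ty m (msum a b fs) = Some (a, b)"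
  by (induction fs) (auto simp: msum_def)

lemma heq_ty: "heq m f g \<Longrightarrow> ty m f \<noteq> None \<and> ty m g = ty m f"
proof (induction rule: heq.induct)
  case (I_pos1)
  have M: "ty m (msum [True, False] [True, False] (map (\<lambda>r. Comp (Gv r) (dx r)) [0..<nat m])) = Some ([True, False], [True, False])"
    using I_pos1 by (intro ty_msum) auto
  then show ?case by (simp only: ty.simps M tadd.simps) simp
next
  case (I_neg1)
  have M: "ty m (msum [False,True] [False,True] (map (\<lambda>r. Comp (cx r) (Gv r)) [0..<nat (-m)])) = Some ([False,True], [False,True])"
    using I_neg1 by (intro ty_msum) auto
  then show ?case by (simp only: ty.simps M tadd.simps) simp
qed (auto simp: hty_ty dx_def cx_def split: if_splits)




lemma tcomp_assoc: "tcomp (tcomp x y) z = tcomp x (tcomp y z)"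
  by (cases x; cases y; cases z) (auto split: if_splits)
lemma ttens_assoc: "ttens (ttens x y) z = ttens x (ttens y z)"
  by (cases x; cases y; cases z) (auto split: if_splits)
lemma tadd_assoc: "tadd (tadd x y) z = tadd x (tadd y z)"
  by (cases x; cases y; cases z) (auto split: if_splits)
lemma tadd_comm: "tadd x y = tadd y x"
  by (cases x; cases y) (auto split: if_splits)
lemma tadd_same: "tadd x x = x"
  by (cases x) auto
lemma tcomp_tadd_l: "tcomp (tadd x y) z = tadd (tcomp x z) (tcomp y z)"
  by (cases x; cases y; cases z) (auto split: if_splits)
lemma tcomp_tadd_r: "tcomp x (tadd y z) = tadd (tcomp x y) (tcomp x z)"
  by (cases x; cases y; cases z) (auto split: if_splits)
lemma ttens_tadd_l: "ttens (tadd x y) z = tadd (ttens x z) (ttens y z)"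
  by (cases x; cases y; cases z) (auto split: if_splits)
lemma ttens_tadd_r: "ttens x (tadd y z) = tadd (ttens x y) (ttens x z)"
  by (cases x; cases y; cases z) (auto split: if_splits)
lemma ttens_None[simp]: "ttens None x = None" "ttens x None = None"
  by (cases x; auto)+
lemma tcomp_None[simp]: "tcomp None x = None" "tcomp x None = None"
  by (cases x; auto)+
lemma tadd_None[simp]: "tadd None x = None" "tadd x None = None"
  by (cases x; auto)+

lemma ty0: "ty 0 f = Some t \<Longrightarrow> ty m f = Some t"
proof (induction f arbitrary: t)
  case (Comp f g) then show ?case by (cases t) (auto simp: tcomp_Some)
next
  case (Tens f g) then show ?case by (cases t) (auto simp: ttens_Some)
next
  case (Add f g) then show ?case by (auto simp: tadd_Some)
qed (auto split: if_splits)

lemma heq_refl: "ty m f \<noteq> None \<Longrightarrow> heq m f f"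
  by (auto simp: hty_ty[symmetric] intro: heq.eq_refl)

definition R :: "int \<Rightarrow> 'k::comm_ring_1 mor \<Rightarrow> 'k mor \<Rightarrow> bool" where
  "R m f g \<longleftrightarrow> heq m f g \<or> (ty m f = None \<and> ty m g = None)"

definition E :: "'k::comm_ring_1 mor \<Rightarrow> 'k mor \<Rightarrow> bool" where
  "E f g \<longleftrightarrow> (\<forall>m. R m f g)"

lemma R_ty: "R m f g \<Longrightarrow> ty m g = ty m f"
  unfolding R_def using heq_ty by fastforce

lemma R_heq: "R m f g \<Longrightarrow> ty m f \<noteq> None \<Longrightarrow> heq m f g"
  unfolding R_def by auto

lemma R_intro: "(\<And>a b. ty m A = Some (a,b) \<Longrightarrow> heq m A B) \<Longrightarrow> ty m A = ty m B \<Longrightarrow> R m A B"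
  unfolding R_def by (cases "ty m A") auto

lemma equivp_E: "equivp E"
proof (rule equivpI)
  show "reflp E" unfolding reflp_def E_def R_def using heq_refl by blast
  show "symp E" unfolding symp_def E_def R_def using heq.eq_sym by blast
  show "transp E" unfolding transp_def E_def R_def
    using heq.eq_trans heq_ty by (metis)
qed

quotient_type (overloaded) 'k dg = "'k::comm_ring_1 mor" / E
  by (rule equivp_E)

lemma R_comp: "R m f f' \<Longrightarrow> R m g g' \<Longrightarrow> R m (Comp f g) (Comp f' g')"
  apply (rule R_intro)
   apply (simp add: tcomp_Some)
   apply (elim exE conjE)
   apply (rule heq.cong_comp)
      apply (auto simp: R_def hty_ty)[4]
  apply (simp add: R_ty)
  done

lemma R_tens: "R m f f' \<Longrightarrow> R m g g' \<Longrightarrow> R m (Tens f g) (Tens f' g')"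
  apply (rule R_intro)
   apply (simp add: ttens_Some)
   apply (elim exE conjE)
   apply (rule heq.cong_tens)
     apply (auto simp: R_def hty_ty)[2]
  apply (simp add: R_ty)
  done

lemma R_add: "R m f f' \<Longrightarrow> R m g g' \<Longrightarrow> R m (Add f g) (Add f' g')"
  apply (rule R_intro)
   apply (simp add: tadd_Some)
   apply (rule heq.cong_add)
      apply (auto simp: R_def hty_ty)[4]
  apply (simp add: R_ty)
  done

lemma R_smul: "R m f f' \<Longrightarrow> R m (Smul r f) (Smul r f')"
  apply (rule R_intro)
   apply (rule heq.cong_smul)
   apply (auto simp: R_def hty_ty)[1]
  apply (simp add: R_ty)
  done

lift_definition Q :: "'k::comm_ring_1 mor \<Rightarrow> 'k dg" is "\<lambda>f. f" .
lift_definition qcomp :: "'k::comm_ring_1 dg \<Rightarrow> 'k dg \<Rightarrow> 'k dg" (infixr "\<odot>" 55) is Comp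
  unfolding E_def using R_comp by blast
lift_definition qtens :: "'k::comm_ring_1 dg \<Rightarrow> 'k dg \<Rightarrow> 'k dg" (infixr "\<otimes>" 60) is Tens
  unfolding E_def using R_tens by blast
lift_definition qadd :: "'k::comm_ring_1 dg \<Rightarrow> 'k dg \<Rightarrow> 'k dg" (infixr "\<boxplus>" 65) is Add
  unfolding E_def using R_add by blast
lift_definition qsmul :: "'k::comm_ring_1 \<Rightarrow> 'k dg \<Rightarrow> 'k dg" is Smul
  unfolding E_def using R_smul by blast
lift_definition qty :: "'k::comm_ring_1 dg \<Rightarrow> (obj \<times> obj) option" is "ty 0"
  unfolding E_def using R_ty by metis

abbreviation qid :: "obj \<Rightarrow> 'k::comm_ring_1 dg" where "qid a \<equiv> Q (Id a)"
abbreviation qzer :: "obj \<Rightarrow> obj \<Rightarrow> 'k::comm_ring_1 dg" where "qzer a b \<equiv> Q (Zer a b)"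

lemma Q_hom[simp]: "Q (Comp f g) = Q f \<odot> Q g" "Q (Tens f g) = Q f \<otimes> Q g"
  "Q (Add f g) = Q f \<boxplus> Q g" "Q (Smul r f) = qsmul r (Q f)"
  by (transfer, rule equivp_reflp[OF equivp_E])+

lemma qty_Q[simp]: "qty (Q f) = ty 0 f" by transfer simp
lemma qty_ops[simp]: "qty (F \<odot> G) = tcomp (qty F) (qty G)" "qty (F \<otimes> G) = ttens (qty F) (qty G)"
  "qty (F \<boxplus> G) = tadd (qty F) (qty G)" "qty (qsmul r F) = qty F"
  by (transfer, simp)+

lemma Q_eq: "Q f = Q g \<longleftrightarrow> E f g"
  by transfer (rule refl)

lemma Q_eq_heq: "Q f = Q g \<Longrightarrow> ty m f \<noteq> None \<Longrightarrow> heq m f g"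
  unfolding Q_eq E_def using R_heq by blast

lemma E_intro: "(\<And>m a b. ty m A = Some (a,b) \<Longrightarrow> heq m A B) \<Longrightarrow> (\<And>m. ty m A = ty m B) \<Longrightarrow> E A B"
  unfolding E_def using R_intro by blast

lemmas TS = tcomp_Some ttens_Some tadd_Some hty_ty[symmetric]

lemma qcomp_assoc: "(F \<odot> G) \<odot> H = F \<odot> (G \<odot> H)"
  by (transfer, rule E_intro, auto simp: TS intro: heq.comp_assoc) (simp_all add: tcomp_assoc)
lemma qtens_assoc: "(F \<otimes> G) \<otimes> H = F \<otimes> (G \<otimes> H)"
  by (transfer, rule E_intro, auto simp: TS intro: heq.tens_assoc) (simp_all add: ttens_assoc)
lemma qtens_unitl: "qid [] \<otimes> F = F"
  apply (transfer, rule E_intro, auto simp: TS intro: heq.tens_unitl)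
  subgoal for f m by (cases "ty m f") auto
  done
lemma qtens_unitr: "F \<otimes> qid [] = F"
  apply (transfer, rule E_intro, auto simp: TS intro: heq.tens_unitr)
  subgoal for f m by (cases "ty m f") auto
  done
lemma qtens_id: "qid a \<otimes> qid b = qid (a @ b)"
  by (transfer, rule E_intro, auto simp: TS intro: heq.tens_id)
lemma qadd_assoc: "(F \<boxplus> G) \<boxplus> H = F \<boxplus> (G \<boxplus> H)"
  by (transfer, rule E_intro, auto simp: TS intro: heq.add_assoc) (simp_all add: tadd_assoc)
lemma qadd_comm: "F \<boxplus> G = G \<boxplus> F"
  by (transfer, rule E_intro, auto simp: TS intro: heq.add_comm) (simp_all add: tadd_comm)
lemma qsmul_add: "qsmul r (F \<boxplus> G) = qsmul r F \<boxplus> qsmul r G"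
  by (transfer, rule E_intro, auto simp: TS intro: heq.smul_add)
lemma qadd_smul: "qsmul (r + q) F = qsmul r F \<boxplus> qsmul q F"
  by (transfer, rule E_intro, auto simp: TS intro: heq.add_smul) (simp_all add: tadd_same)
lemma qsmul_smul: "qsmul r (qsmul q F) = qsmul (r * q) F"
  by (transfer, rule E_intro, auto simp: TS intro: heq.smul_smul)
lemma qsmul_one: "qsmul 1 F = F"
  by (transfer, rule E_intro, auto simp: TS intro: heq.smul_one)
lemma qcomp_addl: "(F \<boxplus> G) \<odot> H = (F \<odot> H) \<boxplus> (G \<odot> H)"
  by (transfer, rule E_intro, auto simp: TS intro: heq.comp_addl) (simp_all add: tcomp_tadd_l)
lemma qcomp_addr: "F \<odot> (G \<boxplus> H) = (F \<odot> G) \<boxplus> (F \<odot> H)"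
  by (transfer, rule E_intro, auto simp: TS intro: heq.comp_addr) (simp_all add: tcomp_tadd_r)
lemma qtens_addl: "(F \<boxplus> G) \<otimes> H = (F \<otimes> H) \<boxplus> (G \<otimes> H)"
  by (transfer, rule E_intro, auto simp: TS intro: heq.tens_addl) (simp_all add: ttens_tadd_l)
lemma qtens_addr: "F \<otimes> (G \<boxplus> H) = (F \<otimes> G) \<boxplus> (F \<otimes> H)"
  by (transfer, rule E_intro, auto simp: TS intro: heq.tens_addr) (simp_all add: ttens_tadd_r)
lemma qcomp_smull: "qsmul r F \<odot> G = qsmul r (F \<odot> G)"
  by (transfer, rule E_intro, auto simp: TS intro: heq.comp_smull)
lemma qcomp_smulr: "F \<odot> qsmul r G = qsmul r (F \<odot> G)"
  by (transfer, rule E_intro, auto simp: TS intro: heq.comp_smulr)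
lemma qtens_smull: "qsmul r F \<otimes> G = qsmul r (F \<otimes> G)"
  by (transfer, rule E_intro, auto simp: TS intro: heq.tens_smull)
lemma qtens_smulr: "F \<otimes> qsmul r G = qsmul r (F \<otimes> G)"
  by (transfer, rule E_intro, auto simp: TS intro: heq.tens_smulr)


lemma ty0': "ty 0 f = Some t \<Longrightarrow> (\<forall>m. ty m f = Some t)" using ty0 by blast

lemma qcomp_idl: "qty F = Some (a, b) \<Longrightarrow> qid b \<odot> F = F"
  by (transfer, drule ty0', rule E_intro, auto intro: heq.comp_idl[unfolded hty_ty])
lemma qcomp_idr: "qty F = Some (a, b) \<Longrightarrow> F \<odot> qid a = F"
  by (transfer, drule ty0', rule E_intro, auto intro: heq.comp_idr[unfolded hty_ty])
lemma qadd_zero: "qty F = Some (a, b) \<Longrightarrow> F \<boxplus> qzer a b = F"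
  by (transfer, drule ty0', rule E_intro, auto intro: heq.add_zero[unfolded hty_ty])
lemma qadd_neg: "qty F = Some (a, b) \<Longrightarrow> F \<boxplus> qsmul (-1) F = qzer a b"
  by (transfer, drule ty0', rule E_intro, auto intro: heq.add_neg[unfolded hty_ty])
lemma qinterchange: "qty F = Some (a, b) \<Longrightarrow> qty G = Some (b, c) \<Longrightarrow> qty H = Some (d, e)
   \<Longrightarrow> qty K = Some (e, p) \<Longrightarrow> (G \<otimes> K) \<odot> (F \<otimes> H) = (G \<odot> F) \<otimes> (K \<odot> H)"
  apply transfer
  apply (drule ty0')+
  apply (rule E_intro)
  apply (simp_all)
  apply (rule heq.interchange)
  apply (auto simp: hty_ty)
  done

lemma qH_ss: "Q Gs \<odot> Q Gs = qid [True,True]"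
  by (transfer, rule E_intro, auto intro: heq.H_ss)
lemma qH_braid: "(Q Gs \<otimes> qid [True]) \<odot> (qid [True] \<otimes> Q Gs) \<odot> (Q Gs \<otimes> qid [True])
   = (qid [True] \<otimes> Q Gs) \<odot> (Q Gs \<otimes> qid [True]) \<odot> (qid [True] \<otimes> Q Gs)"
  by (transfer, rule E_intro, auto intro: heq.H_braid)
lemma qH_dot: "((Q Gx \<otimes> qid [True]) \<odot> Q Gs) \<boxplus> qsmul (-1) (Q Gs \<odot> (qid [True] \<otimes> Q Gx))
   = qid [True,True]"
  by (transfer, rule E_intro, auto intro: heq.H_dot)
lemma qA_up: "(Q Gd \<otimes> qid [True]) \<odot> (qid [True] \<otimes> Q Gc) = qid [True]"
  by (transfer, rule E_intro, auto intro: heq.A_up)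
lemma qA_down: "(qid [False] \<otimes> Q Gd) \<odot> (Q Gc \<otimes> qid [False]) = qid [False]"
  by (transfer, rule E_intro, auto intro: heq.A_down)



definition qok :: "'k::comm_ring_1 dg \<Rightarrow> bool" where "qok F \<longleftrightarrow> qty F \<noteq> None"
definition qdom :: "'k::comm_ring_1 dg \<Rightarrow> obj" where "qdom F = fst (the (qty F))"
definition qcod :: "'k::comm_ring_1 dg \<Rightarrow> obj" where "qcod F = snd (the (qty F))"

lemma ichg: "qok F \<Longrightarrow> qok G \<Longrightarrow> qok H \<Longrightarrow> qok K \<Longrightarrow> qdom G = qcod F \<Longrightarrow> qdom K = qcod H
  \<Longrightarrow> (G \<otimes> K) \<odot> (F \<otimes> H) = (G \<odot> F) \<otimes> (K \<odot> H)"
  unfolding qok_def qdom_def qcod_def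
  using qinterchange[of F "fst(the(qty F))" "snd(the(qty F))" G "snd(the(qty G))" H "fst(the(qty H))" "snd(the(qty H))" K "snd(the(qty K))"]
  by auto
lemma idl: "qok F \<Longrightarrow> qcod F = b \<Longrightarrow> qid b \<odot> F = F"
  unfolding qok_def qcod_def using qcomp_idl[of F "fst (the (qty F))" b] by auto
lemma idr: "qok F \<Longrightarrow> qdom F = a \<Longrightarrow> F \<odot> qid a = F"
  unfolding qok_def qdom_def using qcomp_idr[of F a "snd (the (qty F))"] by auto
lemma qid_app: "qid (a @ b) = qid a \<otimes> qid b"
  by (simp add: qtens_id)

lemma core: "qty g = Some (a, b) \<Longrightarrow> qty h = Some (c, d) \<Longrightarrow>
  (qid P \<otimes> g \<otimes> qid (M @ d @ N)) \<odot> (qid (P @ a @ M) \<otimes> h \<otimes> qid N)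
  = (qid (P @ b @ M) \<otimes> h \<otimes> qid N) \<odot> (qid P \<otimes> g \<otimes> qid (M @ c @ N))"
  apply (simp only: qid_app qtens_assoc)
  apply (simp add: ichg idl idr qok_def qdom_def qcod_def)
  done

lemma qtens_id2: "qid a \<otimes> (qid b \<otimes> F) = qid (a @ b) \<otimes> F"
  by (simp add: qtens_id qtens_assoc[symmetric])

lemma wsplitL: "qok A \<Longrightarrow> qok B \<Longrightarrow> qdom A = qcod B \<Longrightarrow> qid P \<otimes> (A \<odot> B) = (qid P \<otimes> A) \<odot> (qid P \<otimes> B)"
  by (subst ichg) (auto simp: qok_def qdom_def qcod_def idl)
lemma wsplitR: "qok A \<Longrightarrow> qok B \<Longrightarrow> qdom A = qcod B \<Longrightarrow> (A \<odot> B) \<otimes> qid N = (A \<otimes> qid N) \<odot> (B \<otimes> qid N)"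
  by (subst ichg) (auto simp: qok_def qdom_def qcod_def idl)

lemmas nf = qcomp_assoc qtens_assoc qtens_unitl qtens_unitr qtens_id qtens_id2 idl idr
  qok_def qdom_def qcod_def wsplitL wsplitR
  qcomp_smull qcomp_smulr qtens_smull qtens_smulr qsmul_smul qsmul_one

type_synonym 'k slc = "obj \<times> 'k dg \<times> obj"

fun slq :: "'k::comm_ring_1 slc \<Rightarrow> 'k dg" where "slq (P, g, N) = qid P \<otimes> g \<otimes> qid N"

fun chq :: "obj \<Rightarrow> 'k::comm_ring_1 slc list \<Rightarrow> 'k dg" where
  "chq a [] = qid a"
| "chq a (s # L) = slq s \<odot> chq a L"

fun chty :: "obj \<Rightarrow> 'k::comm_ring_1 slc list \<Rightarrow> obj option" where
  "chty a [] = Some a"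
| "chty a ((P, g, N) # L) = (case chty a L of None \<Rightarrow> None | Some b \<Rightarrow>
     (case qty g of None \<Rightarrow> None | Some (x, y) \<Rightarrow> if P @ x @ N = b then Some (P @ y @ N) else None))"

lemma chq_ty: "qty (chq a L) = map_option (\<lambda>b. (a, b)) (chty a L)"
  by (induction L) (auto split: option.splits)

lemma chq_append: "chty a L2 = Some b \<Longrightarrow> chq a (L1 @ L2) = chq b L1 \<odot> chq a L2"
proof (induction L1)
  case Nil then show ?case by (simp add: idl qok_def qcod_def chq_ty)
next
  case (Cons s L1) then show ?case by (simp add: qcomp_assoc)
qed

lemma chty_append: "chty a (L1 @ L2) = (case chty a L2 of None \<Rightarrow> None | Some b \<Rightarrow> chty b L1)"
  by (induction L1) (auto split: option.splits)

definition whisk :: "obj \<Rightarrow> obj \<Rightarrow> 'k::comm_ring_1 slc list \<Rightarrow> 'k slc list" where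
  "whisk P N L = map (\<lambda>(P', g, N'). (P @ P', g, N' @ N)) L"

lemma chty_whisk: "chty a L = Some b \<Longrightarrow> chty (P @ a @ N) (whisk P N L) = Some (P @ b @ N)"
  by (induction L arbitrary: b) (auto simp: whisk_def split: option.splits if_splits)

lemma chq_whisk: "chty a L \<noteq> None \<Longrightarrow> chq (P @ a @ N) (whisk P N L) = qid P \<otimes> chq a L \<otimes> qid N"
proof (induction L)
  case Nil then show ?case by (simp add: whisk_def qid_app)
next
  case (Cons s L)
  obtain P' g N' where s: "s = (P', g, N')" by (cases s)
  from Cons.prems obtain b x y where L: "chty a L = Some b" and g: "qty g = Some (x, y)"
     and b: "b = P' @ x @ N'"
    by (auto simp: s split: option.splits if_splits)
  have "chq (P @ a @ N) (whisk P N (s # L)) = slq (P @ P', g, N' @ N) \<odot> chq (P @ a @ N) (whisk P N L)"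
    by (simp add: s whisk_def)
  also have "\<dots> = slq (P @ P', g, N' @ N) \<odot> (qid P \<otimes> chq a L \<otimes> qid N)"
    using Cons L by simp
  also have "\<dots> = qid P \<otimes> (slq s \<odot> chq a L) \<otimes> qid N"
    using L g b by (simp add: s nf chq_ty)
  finally show ?case by simp
qed

lemma repl_at: "chq c M = chq c M' \<Longrightarrow> chty c M \<noteq> None \<Longrightarrow> take (length M) (drop i L) = whisk P N M
  \<Longrightarrow> chty a (drop (i + length M) L) = Some (P @ c @ N)
  \<Longrightarrow> chq a L = chq a (take i L @ whisk P N M' @ drop (i + length M) L)"
proof -
  assume eq: "chq c M = chq c M'" and ty: "chty c M \<noteq> None"
    and tk: "take (length M) (drop i L) = whisk P N M"
    and dr: "chty a (drop (i + length M) L) = Some (P @ c @ N)"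
  obtain d where d: "chty c M = Some d" using ty by auto
  have d': "chty c M' = Some d" using arg_cong[OF eq, of qty] d by (cases "chty c M'") (auto simp: chq_ty)
  have L: "L = take i L @ whisk P N M @ drop (i + length M) L"
    using tk by (metis append_take_drop_id add.commute drop_drop)
  have "chq a L = chq a (take i L @ whisk P N M @ drop (i + length M) L)"
    using L by simp
  also have "\<dots> = chq (P @ d @ N) (take i L) \<odot> chq (P @ c @ N) (whisk P N M) \<odot> chq a (drop (i + length M) L)"
    using dr chty_whisk[OF d] by (simp add: chq_append chty_append)
  also have "\<dots> = chq (P @ d @ N) (take i L) \<odot> chq (P @ c @ N) (whisk P N M') \<odot> chq a (drop (i + length M) L)"
    using d d' eq by (simp add: chq_whisk)
  also have "\<dots> = chq a (take i L @ whisk P N M' @ drop (i + length M) L)"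
    using dr chty_whisk[OF d'] by (simp add: chq_append chty_append)
  finally show ?thesis .
qed

fun swp :: "bool \<Rightarrow> 'k::comm_ring_1 slc \<Rightarrow> 'k slc \<Rightarrow> ('k slc \<times> 'k slc) option" where
  "swp dir (P1, g1, N1) (P2, g2, N2) = (case (qty g1, qty g2) of
     (Some (a1, b1), Some (a2, b2)) \<Rightarrow>
       if dir then (if length P1 + length a1 \<le> length P2 then
         (let mid = drop (length P1 + length a1) P2 in Some ((P1 @ b1 @ mid, g2, N2), (P1, g1, mid @ a2 @ N2)))
         else None)
       else (if length P2 + length b2 \<le> length P1 then
         (let mid = drop (length P2 + length b2) P1 in Some ((P2, g2, mid @ b1 @ N1), (P2 @ a2 @ mid, g1, N1)))
       else None)
   | _ \<Rightarrow> None)"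

lemma split_lists: "P1 @ a1 @ N1 = P2 @ b2 @ N2 \<Longrightarrow> length P1 + length a1 \<le> length P2 \<Longrightarrow>
   P2 = P1 @ a1 @ drop (length P1 + length a1) P2 \<and> N1 = drop (length P1 + length a1) P2 @ b2 @ N2"
proof -
  assume e: "P1 @ a1 @ N1 = P2 @ b2 @ N2" and l: "length P1 + length a1 \<le> length P2"
  let ?k = "length P1 + length a1"
  have "take ?k (P1 @ a1 @ N1) = P1 @ a1" by simp
  moreover have "take ?k (P2 @ b2 @ N2) = take ?k P2" using l by simp
  ultimately have t: "take ?k P2 = P1 @ a1" using e by simp
  have P2: "P2 = P1 @ a1 @ drop ?k P2" using t by (metis append_assoc append_take_drop_id)
  then have "P1 @ a1 @ N1 = P1 @ a1 @ drop ?k P2 @ b2 @ N2" using e by (metis append_assoc)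
  then show ?thesis using P2 by simp
qed

lemma swp_ok: "swp dir s1 s2 = Some (t1, t2) \<Longrightarrow> chty b [s1, s2] \<noteq> None \<Longrightarrow> slq s1 \<odot> slq s2 = slq t1 \<odot> slq t2"
proof -
  assume sw: "swp dir s1 s2 = Some (t1, t2)" and ty: "chty b [s1, s2] \<noteq> None"
  obtain P1 g1 N1 where s1: "s1 = (P1, g1, N1)" by (cases s1)
  obtain P2 g2 N2 where s2: "s2 = (P2, g2, N2)" by (cases s2)
  obtain a1 b1 a2 b2 where g1: "qty g1 = Some (a1, b1)" and g2: "qty g2 = Some (a2, b2)"
    using sw by (auto simp: s1 s2 split: option.splits)
  have eq: "P1 @ a1 @ N1 = P2 @ b2 @ N2"
    using ty g1 g2 by (auto simp: s1 s2 split: option.splits if_splits)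
  show ?thesis
  proof (cases dir)
    case True
    then have C1: "length P1 + length a1 \<le> length P2" using sw g1 g2 by (auto simp: s1 s2 split: if_splits)
    let ?m = "drop (length P1 + length a1) P2"
    have L: "P2 = P1 @ a1 @ ?m" "N1 = ?m @ b2 @ N2" using split_lists[OF eq C1] by auto
    have t: "t1 = (P1 @ b1 @ ?m, g2, N2)" "t2 = (P1, g1, ?m @ a2 @ N2)"
      using sw C1 \<open>dir\<close> g1 g2 by (auto simp: s1 s2 Let_def)
    show ?thesis unfolding t s1 s2 slq.simps
      using core[OF g1 g2, of P1 ?m N2] L by metis
  next
    case False
    then have F: "length P2 + length b2 \<le> length P1" using sw g1 g2 by (auto simp: s1 s2 split: if_splits)
    note False = False
    let ?m = "drop (length P2 + length b2) P1"
    have L: "P1 = P2 @ b2 @ ?m" "N2 = ?m @ a1 @ N1" using split_lists[OF eq[symmetric] F] by auto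
    have t: "t1 = (P2, g2, ?m @ b1 @ N1)" "t2 = (P2 @ a2 @ ?m, g1, N1)"
      using sw F \<open>\<not>dir\<close> g1 g2 by (auto simp: s1 s2 Let_def split: if_splits)
    show ?thesis unfolding t s1 s2 slq.simps
      using core[OF g2 g1, of P2 ?m N1] L by metis
  qed
qed

definition swap_at :: "bool \<Rightarrow> nat \<Rightarrow> 'k::comm_ring_1 slc list \<Rightarrow> 'k slc list" where
  "swap_at dir i L = (case swp dir (L ! i) (L ! Suc i) of Some (t1, t2) \<Rightarrow> take i L @ [t1, t2] @ drop (Suc (Suc i)) L | None \<Rightarrow> L)"

lemma chq_swap_at: fixes L :: "'k::comm_ring_1 slc list" shows "Suc i < length L \<Longrightarrow> chty a L \<noteq> None \<Longrightarrow> chq a L = chq a (swap_at dir i L)"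
proof (cases "swp dir (L ! i) (L ! Suc i)")
  case None then show ?thesis by (simp add: swap_at_def)
next
  case (Some t)
  obtain t1 t2 where t: "t = (t1, t2)" by (cases t)
  assume len: "Suc i < length L" and ty: "chty a L \<noteq> None"
  have L: "L = take i L @ [L ! i, L ! Suc i] @ drop (Suc (Suc i)) L"
    using len by (metis Cons_nth_drop_Suc Suc_lessD append_Cons append_Nil append_take_drop_id)
  obtain b where b: "chty a (drop (Suc (Suc i)) L) = Some b"
    using ty L by (metis chty_append option.simps(4) option.exhaust)
  have ty2: "chty b [L ! i, L ! Suc i] \<noteq> None"
    using ty L b by (metis chty_append option.simps(4) option.simps(5))
  have sw: "slq (L ! i) \<odot> slq (L ! Suc i) = slq t1 \<odot> slq t2"
    using swp_ok[OF _ ty2] Some t by simp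
  obtain c where c: "chty b [L ! i, L ! Suc i] = Some c" using ty2 by auto
  have c': "chty b [t1, t2] = Some c"
  proof -
    have e: "chq b [L ! i, L ! Suc i] = chq b [t1, t2]" by (simp only: chq.simps qcomp_assoc[symmetric] sw)
    have "map_option (Pair b) (chty b [L ! i, L ! Suc i]) = map_option (Pair b) (chty b [t1, t2])"
      using arg_cong[OF e, of qty] by (simp only: chq_ty)
    then show ?thesis using c by (cases "chty b [t1, t2]") auto
  qed
  have A: "\<And>x y :: 'k slc. chty b [x, y] = Some c \<Longrightarrow> chq a (take i L @ [x, y] @ drop (Suc (Suc i)) L)
       = chq c (take i L) \<odot> chq b [x, y] \<odot> chq a (drop (Suc (Suc i)) L)"
  proof -
    fix x y :: "'k slc" assume xy: "chty b [x, y] = Some c"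
    have "chq a (take i L @ [x, y] @ drop (Suc (Suc i)) L) = chq a ((take i L @ [x, y]) @ drop (Suc (Suc i)) L)"
      by simp
    also have "\<dots> = chq b (take i L @ [x, y]) \<odot> chq a (drop (Suc (Suc i)) L)"
      by (rule chq_append[OF b])
    also have "\<dots> = (chq c (take i L) \<odot> chq b [x, y]) \<odot> chq a (drop (Suc (Suc i)) L)"
      by (simp only: chq_append[OF xy])
    finally show "chq a (take i L @ [x, y] @ drop (Suc (Suc i)) L)
       = chq c (take i L) \<odot> chq b [x, y] \<odot> chq a (drop (Suc (Suc i)) L)" by (simp only: qcomp_assoc)
  qed
  have "chq a L = chq a (take i L @ [L ! i, L ! Suc i] @ drop (Suc (Suc i)) L)" using L by simp
  also have "\<dots> = chq c (take i L) \<odot> chq b [L ! i, L ! Suc i] \<odot> chq a (drop (Suc (Suc i)) L)"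
    by (rule A[OF c])
  also have "\<dots> = chq c (take i L) \<odot> chq b [t1, t2] \<odot> chq a (drop (Suc (Suc i)) L)"
    by (simp only: chq.simps qcomp_assoc[symmetric] sw)
  also have "\<dots> = chq a (take i L @ [t1, t2] @ drop (Suc (Suc i)) L)"
    by (rule A[OF c', symmetric])
  finally show ?thesis using Some t by (simp add: swap_at_def)
qed




abbreviation "qX \<equiv> Q Gx"
abbreviation "qS \<equiv> Q Gs"
abbreviation "qC \<equiv> Q Gc"
abbreviation "qD \<equiv> Q Gd"
abbreviation "uu \<equiv> [True]"
abbreviation "nn \<equiv> [False]"

lemma zig: "chq [True] [([], qD, [True]), ([True], qC, [])] = chq [True] []"
  by (simp add: nf qA_up chq.simps)
lemma zig_ty: "chty [True] [([], qD, [True]), ([True], qC, [])] \<noteq> None" by simp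
lemma zag: "chq [False] [([False], qD, []), ([], qC, [False])] = chq [False] []"
  by (simp add: nf qA_down chq.simps)
lemma zag_ty: "chty [False] [([False], qD, []), ([], qC, [False])] \<noteq> None" by simp

declare chq.simps[simp del]
lemmas chs = swap_at_def Let_def

lemma LR_test:
  assumes f: "ty 0 f = Some (True # X, Y @ [True])"
  shows "chq (True # X) [([], qD, Y @ [True]), (True # False # Y, qD, [True]), ([True, False], Q f, [False, True]),
      ([True], qC, X @ [False, True]), (True # X, qC, [])] = chq (True # X) [([], Q f, [])]"
  using f
  apply (subst chq_swap_at[where dir=True and i=0], simp, simp, simp add: chs)
  apply (subst chq_swap_at[where dir=True and i=1], simp, simp, simp add: chs)
  apply (subst repl_at[OF zig zig_ty, where i=2 and P="[]" and N="X@[False,True]"], simp add: whisk_def, simp, simp add: whisk_def)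
  apply (subst chq_swap_at[where dir=True and i=1], simp, simp, simp add: chs)
  apply (subst repl_at[OF zig zig_ty, where i=0 and P="Y" and N="[]"], simp add: whisk_def, simp, simp add: whisk_def)
  done

lemma expand: "L ! i = (P, G, N) \<Longrightarrow> G = chq c M \<Longrightarrow> chty c M \<noteq> None \<Longrightarrow> i < length L
  \<Longrightarrow> chty a (drop (Suc i) L) = Some (P @ c @ N)
  \<Longrightarrow> chq a L = chq a (take i L @ whisk P N M @ drop (Suc i) L)"
proof -
  assume Li: "L ! i = (P, G, N)" and G: "G = chq c M" and ty: "chty c M \<noteq> None" and i: "i < length L"
    and dr: "chty a (drop (Suc i) L) = Some (P @ c @ N)"
  obtain d where d: "chty c M = Some d" using ty by auto
  have e: "chq c [([], G, [])] = chq c M"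
    using d G by (simp add: chq.simps nf chq_ty)
  have t: "chty c [([], G, [])] \<noteq> None" using d G by (simp add: chq_ty)
  have "take (length [([], G, [])]) (drop i L) = whisk P N [([], G, [])]"
    using Li i by (simp add: whisk_def take_Suc_conv_app_nth)
  from repl_at[OF e t this] dr show ?thesis by simp
qed

lemma chq_add: "chq a (L1 @ (P, F \<boxplus> G, N) # L2) = chq a (L1 @ (P, F, N) # L2) \<boxplus> chq a (L1 @ (P, G, N) # L2)"
  by (induction L1) (auto simp: chq.simps qcomp_addl qcomp_addr qtens_addl qtens_addr)
lemma chq_smul: "chq a (L1 @ (P, qsmul r F, N) # L2) = qsmul r (chq a (L1 @ (P, F, N) # L2))"
  by (induction L1) (auto simp: chq.simps qcomp_smull qcomp_smulr qtens_smull qtens_smulr)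

definition isdual :: "obj \<Rightarrow> obj \<Rightarrow> 'k::comm_ring_1 dg \<Rightarrow> 'k dg \<Rightarrow> bool" where
  "isdual A A' cu ca \<longleftrightarrow> qty cu = Some ([], A' @ A) \<and> qty ca = Some (A @ A', [])
    \<and> chq A [([], ca, A), (A, cu, [])] = chq A [] \<and> chq A' [(A', ca, []), ([], cu, A')] = chq A' []"

lemma dual_zig: "isdual A A' cu ca \<Longrightarrow> chq A [([], ca, A), (A, cu, [])] = chq A []"
  by (simp add: isdual_def)
lemma dual_zag: "isdual A A' cu ca \<Longrightarrow> chq A' [(A', ca, []), ([], cu, A')] = chq A' []"
  by (simp add: isdual_def)
lemma dual_zig_ty: "isdual A A' cu ca \<Longrightarrow> chty A [([], ca, A), (A, cu, [])] \<noteq> None"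
  by (simp add: isdual_def)
lemma dual_zag_ty: "isdual A A' cu ca \<Longrightarrow> chty A' [(A', ca, []), ([], cu, A')] \<noteq> None"
  by (simp add: isdual_def)

definition tcu :: "obj \<Rightarrow> obj \<Rightarrow> 'k::comm_ring_1 dg \<Rightarrow> 'k dg \<Rightarrow> 'k dg" where
  "tcu B B' cu cu' = chq [] [(B', cu, B), ([], cu', [])]"
definition tca :: "obj \<Rightarrow> obj \<Rightarrow> obj \<Rightarrow> obj \<Rightarrow> 'k::comm_ring_1 dg \<Rightarrow> 'k dg \<Rightarrow> 'k dg" where
  "tca A A' B B' ca ca' = chq (A @ B @ B' @ A') [([], ca, []), (A, ca', A')]"

lemma tdual: assumes dA: "isdual A A' cu ca" and dB: "isdual B B' cu' ca'"
  shows "isdual (A @ B) (B' @ A') (tcu B B' cu cu') (tca A A' B B' ca ca')"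
proof -
  have tyA: "qty cu = Some ([], A' @ A)" "qty ca = Some (A @ A', [])" using dA by (auto simp: isdual_def)
  have tyB: "qty cu' = Some ([], B' @ B)" "qty ca' = Some (B @ B', [])" using dB by (auto simp: isdual_def)
  have zig: "chq (A @ B) [([], tca A A' B B' ca ca', A @ B), (A @ B, tcu B B' cu cu', [])] = chq (A @ B) []"
    using tyA tyB
    apply (subst expand[where i=1 and c="[]" and M="[(B', cu, B), ([], cu', [])]"], simp, simp add: tcu_def, simp, simp, simp)
    apply (subst expand[where i=0 and c="A @ B @ B' @ A'" and M="[([], ca, []), (A, ca', A')]"], simp, simp add: tca_def, simp, simp, simp add: whisk_def)
    apply (simp add: whisk_def)
    apply (subst chq_swap_at[where dir=True and i=1], simp, simp, simp add: chs)
    apply (subst repl_at[OF dual_zig[OF dB] dual_zig_ty[OF dB], where i=2 and P="A" and N="[]"], simp add: whisk_def, simp, simp add: whisk_def)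
    apply (subst repl_at[OF dual_zig[OF dA] dual_zig_ty[OF dA], where i=0 and P="[]" and N="B"], simp add: whisk_def, simp, simp add: whisk_def)
    done
  have zag: "chq (B' @ A') [(B' @ A', tca A A' B B' ca ca', []), ([], tcu B B' cu cu', B' @ A')] = chq (B' @ A') []"
    using tyA tyB
    apply (subst expand[where i=1 and c="[]" and M="[(B', cu, B), ([], cu', [])]"], simp, simp add: tcu_def, simp, simp, simp)
    apply (subst expand[where i=0 and c="A @ B @ B' @ A'" and M="[([], ca, []), (A, ca', A')]"], simp, simp add: tca_def, simp, simp, simp add: whisk_def)
    apply (simp add: whisk_def)
    apply (subst chq_swap_at[where dir=False and i=1], simp, simp, simp add: chs)
    apply (subst repl_at[OF dual_zag[OF dB] dual_zag_ty[OF dB], where i=2 and P="[]" and N="A'"], simp add: whisk_def, simp, simp add: whisk_def)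
    apply (subst repl_at[OF dual_zag[OF dA] dual_zag_ty[OF dA], where i=0 and P="B'" and N="[]"], simp add: whisk_def, simp, simp add: whisk_def)
    done
  have t1: "qty (tcu B B' cu cu') = Some ([], (B' @ A') @ (A @ B))" using tyA tyB by (simp add: tcu_def chq.simps)
  have t2: "qty (tca A A' B B' ca ca') = Some ((A @ B) @ (B' @ A'), [])" using tyA tyB by (simp add: tca_def chq.simps)
  show ?thesis unfolding isdual_def using zig zag t1 t2 by simp
qed


definition mate :: "obj \<Rightarrow> obj \<Rightarrow> 'k::comm_ring_1 dg \<Rightarrow> 'k dg \<Rightarrow> 'k dg \<Rightarrow> 'k dg" where
  "mate A' B' cu ca' f = chq B' [(A', ca', []), (A', f, B'), ([], cu, B')]"

lemma dual_ty: "isdual A A' cu ca \<Longrightarrow> qty cu = Some ([], A' @ A) \<and> qty ca = Some (A @ A', [])"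
  by (simp add: isdual_def)

lemma mate_comp:
  assumes dA: "isdual A A' cu ca" and dB: "isdual B B' cu' ca'" and dC: "isdual C C' cu'' ca''"
    and f: "qty f = Some (A, B)" and g: "qty g = Some (B, C)"
  shows "mate A' C' cu ca'' (g \<odot> f) = mate A' B' cu ca' f \<odot> mate B' C' cu' ca'' g"
proof -
  note t = dual_ty[OF dA] dual_ty[OF dB] dual_ty[OF dC]
  have R: "mate A' B' cu ca' f \<odot> mate B' C' cu' ca'' g = chq C' ([(A', ca', []), (A', f, B'), ([], cu, B')] @ [(B', ca'', []), (B', g, C'), ([], cu', C')])"
    unfolding mate_def using t f g by (subst chq_append[where b="B'"]) auto
  have "chq C' ([(A', ca', []), (A', f, B'), ([], cu, B')] @ [(B', ca'', []), (B', g, C'), ([], cu', C')])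
     = chq C' [(A', ca'', []), (A', g, C'), (A', f, C'), ([], cu, C')]"
    using t f g
    apply simp
    apply (subst chq_swap_at[where dir=True and i=2], simp, simp, simp add: chs)
    apply (subst chq_swap_at[where dir=True and i=3], simp, simp, simp add: chs)
    apply (subst chq_swap_at[where dir=True and i=4], simp, simp, simp add: chs)
    apply (subst chq_swap_at[where dir=True and i=1], simp, simp, simp add: chs)
    apply (subst chq_swap_at[where dir=True and i=2], simp, simp, simp add: chs)
    apply (subst chq_swap_at[where dir=True and i=3], simp, simp, simp add: chs)
    apply (subst chq_swap_at[where dir=True and i=0], simp, simp, simp add: chs)
    apply (subst chq_swap_at[where dir=True and i=1], simp, simp, simp add: chs)
    apply (subst repl_at[OF dual_zig[OF dB] dual_zig_ty[OF dB], where i=2 and P="A'" and N="C'"], simp add: whisk_def, simp, simp add: whisk_def)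
    done
  also have "\<dots> = mate A' C' cu ca'' (g \<odot> f)"
    unfolding mate_def using t f g
    by (subst (2) expand[where i=1 and c="A" and M="[([], g, []), ([], f, [])]"]) (simp_all add: chq.simps nf whisk_def)
  finally show ?thesis using R by simp
qed


lemma mate_id: assumes dA: "isdual A A' cu ca" shows "mate A' A' cu ca (qid A) = qid A'"
proof -
  note t = dual_ty[OF dA]
  have "mate A' A' cu ca (qid A) = chq A' [(A', ca, []), ([], cu, A')]"
    unfolding mate_def using t
    by (subst expand[where i=1 and c="A" and M="[]"]) (simp_all add: chq.simps whisk_def)
  also have "\<dots> = qid A'" using dual_zag[OF dA] by (simp add: chq.simps)
  finally show ?thesis .
qed

lemma chq_whisk': "chty a L \<noteq> None \<Longrightarrow> qid P \<otimes> chq a L \<otimes> qid N = chq (P @ a @ N) (whisk P N L)"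
  by (simp add: chq_whisk)

lemma mate_whiskR:
  assumes dA: "isdual A A' cuA caA" and dB: "isdual B B' cuB caB" and dC: "isdual C C' cuC caC"
    and f: "qty f = Some (A, B)"
  shows "mate (C' @ A') (C' @ B') (tcu C C' cuA cuC) (tca B B' C C' caB caC) (f \<otimes> qid C)
     = qid C' \<otimes> mate A' B' cuA caB f"
proof -
  note t = dual_ty[OF dA] dual_ty[OF dB] dual_ty[OF dC]
  have "mate (C' @ A') (C' @ B') (tcu C C' cuA cuC) (tca B B' C C' caB caC) (f \<otimes> qid C)
    = chq (C' @ B') [(C' @ A', caB, []), (C' @ A' @ B, caC, B'), (C' @ A', f, C @ C' @ B'), (C', cuA, C @ C' @ B'), ([], cuC, C' @ B')]"
    unfolding mate_def using t f
    apply (subst expand[where i=2 and c="[]" and M="[(C', cuA, C), ([], cuC, [])]"], simp, simp add: tcu_def, simp, simp, simp)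
    apply (subst expand[where i=1 and c="A @ C" and M="[([], f, C)]"], simp, simp add: chq.simps nf, simp, simp, simp add: whisk_def)
    apply (subst expand[where i=0 and c="B @ C @ C' @ B'" and M="[([], caB, []), (B, caC, B')]"], simp, simp add: tca_def, simp, simp, simp add: whisk_def)
    apply (simp add: whisk_def)
    done
  also have "\<dots> = chq (C' @ B') (whisk C' [] [(A', caB, []), (A', f, B'), ([], cuA, B')])"
    using t f
    apply (subst chq_swap_at[where dir=False and i=1], simp, simp, simp add: chs)
    apply (subst chq_swap_at[where dir=False and i=2], simp, simp, simp add: chs)
    apply (subst repl_at[OF dual_zag[OF dC] dual_zag_ty[OF dC], where i=3 and P="[]" and N="B'"], simp add: whisk_def, simp, simp add: whisk_def)
    done
  also have "\<dots> = qid C' \<otimes> mate A' B' cuA caB f"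
    unfolding mate_def using t f chq_whisk[of B' "[(A', caB, []), (A', f, B'), ([], cuA, B')]" C' "[]"]
    by (simp add: qtens_unitr)
  finally show ?thesis .
qed

lemma mate_whiskL:
  assumes dA: "isdual A A' cuA caA" and dB: "isdual B B' cuB caB" and dC: "isdual C C' cuC caC"
    and f: "qty f = Some (A, B)"
  shows "mate (A' @ C') (B' @ C') (tcu A A' cuC cuA) (tca C C' B B' caC caB) (qid C \<otimes> f)
     = mate A' B' cuA caB f \<otimes> qid C'"
proof -
  note t = dual_ty[OF dA] dual_ty[OF dB] dual_ty[OF dC]
  have "mate (A' @ C') (B' @ C') (tcu A A' cuC cuA) (tca C C' B B' caC caB) (qid C \<otimes> f)
    = chq (B' @ C') [(A' @ C', caC, []), (A' @ C' @ C, caB, C'), (A' @ C' @ C, f, B' @ C'), (A', cuC, A @ B' @ C'), ([], cuA, B' @ C')]"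
    unfolding mate_def using t f
    apply (subst expand[where i=2 and c="[]" and M="[(A', cuC, A), ([], cuA, [])]"], simp, simp add: tcu_def, simp, simp, simp)
    apply (subst expand[where i=1 and c="C @ A" and M="[(C, f, [])]"], simp, simp add: chq.simps nf, simp, simp, simp add: whisk_def)
    apply (subst expand[where i=0 and c="C @ B @ B' @ C'" and M="[([], caC, []), (C, caB, C')]"], simp, simp add: tca_def, simp, simp, simp add: whisk_def)
    apply (simp add: whisk_def)
    done
  also have "\<dots> = chq (B' @ C') (whisk [] C' [(A', caB, []), (A', f, B'), ([], cuA, B')])"
    using t f
    apply (subst chq_swap_at[where dir=False and i=2], simp, simp, simp add: chs)
    apply (subst chq_swap_at[where dir=False and i=1], simp, simp, simp add: chs)
    apply (subst repl_at[OF dual_zag[OF dC] dual_zag_ty[OF dC], where i=0 and P="A'" and N="[]"], simp add: whisk_def, simp, simp add: whisk_def)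
    done
  also have "\<dots> = mate A' B' cuA caB f \<otimes> qid C'"
    unfolding mate_def using t f chq_whisk[of B' "[(A', caB, []), (A', f, B'), ([], cuA, B')]" "[]" C']
    by (simp add: qtens_unitl)
  finally show ?thesis .
qed




lemma d1: "isdual [True] [False] qC qD"
  unfolding isdual_def using zig zag by simp

abbreviation "cu2 \<equiv> tcu [True] [False] qC qC"
abbreviation "ca2 \<equiv> tca [True] [False] [True] [False] qD qD"
lemma d2: "isdual [True, True] [False, False] cu2 ca2"
  using tdual[OF d1 d1] by simp

abbreviation "cu3 \<equiv> tcu [True] [False] cu2 qC"
abbreviation "ca3 \<equiv> tca [True, True] [False, False] [True] [False] ca2 qD"
lemma d3: "isdual [True, True, True] [False, False, False] cu3 ca3"
  using tdual[OF d2 d1] by simp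

lemma cu3_eq: "tcu [True, True] [False, False] qC cu2 = cu3"
  by (simp add: tcu_def chq.simps nf)
lemma ca3_eq: "tca [True] [False] [True, True] [False, False] qD ca2 = ca3"
  by (simp add: tca_def chq.simps nf)

abbreviation "mate1 \<equiv> mate [False] [False] qC qD"
abbreviation "mate2 \<equiv> mate [False, False] [False, False] cu2 ca2"
abbreviation "mate3 \<equiv> mate [False, False, False] [False, False, False] cu3 ca3"

lemma mate1_x: "mate1 qX = Q xprime"
  by (simp add: mate_def chq.simps nf xprime_def)
lemma mate2_s: "mate2 qS = Q sprime"
  by (simp add: mate_def chq.simps nf sprime_def tmor_def tcu_def tca_def)


abbreviation "qs' \<equiv> Q sprime"
abbreviation "qx' \<equiv> Q xprime"

lemma ss': "qs' \<odot> qs' = qid [False, False]"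
proof -
  have "qs' \<odot> qs' = mate2 (qS \<odot> qS)"
    unfolding mate2_s[symmetric] by (rule mate_comp[OF d2 d2 d2, symmetric]) auto
  also have "\<dots> = qid [False, False]" using mate_id[OF d2] by (simp add: qH_ss)
  finally show ?thesis .
qed

lemma mate2_xR: "mate2 (qX \<otimes> qid [True]) = qid [False] \<otimes> qx'"
  using mate_whiskR[OF d1 d1 d1, of qX] by (simp add: mate1_x)
lemma mate2_xL: "mate2 (qid [True] \<otimes> qX) = qx' \<otimes> qid [False]"
  using mate_whiskL[OF d1 d1 d1, of qX] by (simp add: mate1_x)
lemma mate3_sR: "mate3 (qS \<otimes> qid [True]) = qid [False] \<otimes> qs'"
  using mate_whiskR[OF d2 d2 d1, of qS] by (simp add: mate2_s)
lemma mate3_sL: "mate3 (qid [True] \<otimes> qS) = qs' \<otimes> qid [False]"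
  using mate_whiskL[OF d2 d2 d1, of qS] by (simp add: mate2_s cu3_eq ca3_eq)

lemma mate3_comp3: "qty f = Some ([True,True,True],[True,True,True]) \<Longrightarrow> qty g = Some ([True,True,True],[True,True,True])
     \<Longrightarrow> qty h = Some ([True,True,True],[True,True,True]) \<Longrightarrow> mate3 (f \<odot> g \<odot> h) = mate3 h \<odot> mate3 g \<odot> mate3 f"
proof -
  assume t: "qty f = Some ([True,True,True],[True,True,True])" "qty g = Some ([True,True,True],[True,True,True])"
      "qty h = Some ([True,True,True],[True,True,True])"
  have "mate3 (f \<odot> (g \<odot> h)) = mate3 (g \<odot> h) \<odot> mate3 f"
    by (rule mate_comp[OF d3 d3 d3]) (use t in simp_all)
  also have "mate3 (g \<odot> h) = mate3 h \<odot> mate3 g"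
    by (rule mate_comp[OF d3 d3 d3]) (use t in simp_all)
  finally show ?thesis by (simp add: qcomp_assoc)
qed

lemma braid':
  "(qs' \<otimes> qid [False]) \<odot> (qid [False] \<otimes> qs') \<odot> (qs' \<otimes> qid [False])
   = (qid [False] \<otimes> qs') \<odot> (qs' \<otimes> qid [False]) \<odot> (qid [False] \<otimes> qs')"
proof -
  let ?a = "qS \<otimes> qid [True]" and ?b = "qid [True] \<otimes> qS"
  have A: "mate3 (?a \<odot> ?b \<odot> ?a) = mate3 (?b \<odot> ?a \<odot> ?b)" by (simp only: qH_braid)
  have B: "mate3 (?a \<odot> ?b \<odot> ?a) = (qid [False] \<otimes> qs') \<odot> (qs' \<otimes> qid [False]) \<odot> (qid [False] \<otimes> qs')"
    using mate3_comp3[of ?a ?b ?a] by (simp add: mate3_sR mate3_sL)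
  have C: "mate3 (?b \<odot> ?a \<odot> ?b) = (qs' \<otimes> qid [False]) \<odot> (qid [False] \<otimes> qs') \<odot> (qs' \<otimes> qid [False])"
    using mate3_comp3[of ?b ?a ?b] by (simp add: mate3_sR mate3_sL)
  show ?thesis using A B C by metis
qed

lemma mate_add: "mate A' B' cu ca (F \<boxplus> G) = mate A' B' cu ca F \<boxplus> mate A' B' cu ca G"
  unfolding mate_def using chq_add[of B' "[(A', ca, [])]"] by simp
lemma mate_smul: "mate A' B' cu ca (qsmul r F) = qsmul r (mate A' B' cu ca F)"
  unfolding mate_def using chq_smul[of B' "[(A', ca, [])]"] by simp

lemma dot0: "(qs' \<odot> (qid [False] \<otimes> qx')) \<boxplus> qsmul (-1) ((qx' \<otimes> qid [False]) \<odot> qs') = qid [False, False]"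
proof -
  have M: "mate2 (((qX \<otimes> qid [True]) \<odot> qS) \<boxplus> qsmul (-1) (qS \<odot> (qid [True] \<otimes> qX))) = mate2 (qid [True, True])"
    by (simp only: qH_dot)
  have M1: "mate2 ((qX \<otimes> qid [True]) \<odot> qS) = qs' \<odot> (qid [False] \<otimes> qx')"
    using mate_comp[OF d2 d2 d2, of qS "qX \<otimes> qid [True]"] by (simp add: mate2_s mate2_xR)
  have M2: "mate2 (qS \<odot> (qid [True] \<otimes> qX)) = (qx' \<otimes> qid [False]) \<odot> qs'"
    using mate_comp[OF d2 d2 d2, of "qid [True] \<otimes> qX" qS] by (simp add: mate2_s mate2_xL)
  have M': "mate2 ((qX \<otimes> qid [True]) \<odot> qS) \<boxplus> qsmul (-1) (mate2 (qS \<odot> (qid [True] \<otimes> qX))) = qid [False, False]"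
    using M by (simp only: mate_add mate_smul mate_id[OF d2])
  show ?thesis using M' unfolding M1 M2 .
qed




definition rotm :: "obj \<Rightarrow> obj \<Rightarrow> 'k mor \<Rightarrow> 'k mor" where
  "rotm X Y f = Comp (Tens (Id (False # Y)) Gd) (Comp (Tens (Id [False]) (Tens f (Id [False]))) (Tens Gc (Id (X @ [False]))))"

lemma rotm_inst: "xprime = rotm [] [] Gx" "tmor = rotm [True] [True] Gs" "sprime = rotm [False] [False] tmor"
  by (simp_all add: rotm_def xprime_def tmor_def sprime_def)

lemma LR:
  assumes f: "ty 0 f = Some (True # X, Y @ [True])"
  shows "chq (True # X) [([], qD, Y @ [True]), ([True], Q (rotm X Y f), [True]), (True # X, qC, [])] = Q f"
proof -
  have "chq (True # X) [([], qD, Y @ [True]), ([True], Q (rotm X Y f), [True]), (True # X, qC, [])]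
    = chq (True # X) [([], qD, Y @ [True]), (True # False # Y, qD, [True]), ([True, False], Q f, [False, True]),
      ([True], qC, X @ [False, True]), (True # X, qC, [])]"
    using f
    apply (subst expand[where i=1 and P="[True]" and N="[True]" and c="X @ [False]" and M="[(False # Y, qD, []), ([False], Q f, [False]), ([], qC, X @ [False])]"])
    apply (simp_all add: rotm_def chq.simps nf whisk_def)
    done
  also have "\<dots> = chq (True # X) [([], Q f, [])]" by (rule LR_test[OF f])
  also have "\<dots> = Q f" using f by (simp add: chq.simps nf)
  finally show ?thesis .
qed


fun om :: "'k::comm_ring_1 mor \<Rightarrow> 'k mor" where
  "om (Id a) = Id (swap_obj a)"
| "om Gx = xprime"
| "om Gs = Smul (-1) sprime"
| "om Gc = Gd"
| "om Gd = Gc"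
| "om Gu = Smul (-1) Gu"
| "om (Gv r) = Gv r"
| "om (Comp f g) = Comp (om g) (om f)"
| "om (Tens f g) = Tens (om f) (om g)"
| "om (Zer a b) = Zer (swap_obj b) (swap_obj a)"
| "om (Add f g) = Add (om f) (om g)"
| "om (Smul r f) = Smul r (om f)"

lemma swap_simps[simp]: "swap_obj [] = []" "swap_obj (x # xs) = (\<not> x) # swap_obj xs"
  "swap_obj (a @ b) = swap_obj a @ swap_obj b" "swap_obj (swap_obj a) = a"
  by (simp_all add: swap_obj_def, induction a, simp_all)

lemma om_ty: "ty m f = Some (a, b) \<Longrightarrow> ty (- m) (om f) = Some (swap_obj b, swap_obj a)"
proof (induction f arbitrary: a b)
  case (Gv r) then show ?case by (auto split: if_splits)
next
  case (Comp f g) then show ?case by (auto simp: tcomp_Some)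
next
  case (Tens f g) then show ?case by (auto simp: ttens_Some)
next
  case (Add f g) then show ?case by (auto simp: tadd_Some)
qed auto

lemma om_hty: "hty m f a b \<Longrightarrow> hty (- m) (om f) (swap_obj b) (swap_obj a)"
  by (simp add: hty_ty om_ty)

lemma Q_om_rot: "ty 0 (om f) = Some (swap_obj Y @ [False], False # swap_obj X) \<Longrightarrow>
  Q (om (rotm X Y f)) = chq (True # swap_obj Y) [([], qD, swap_obj X @ [True]), ([True], Q (om f), [True]), (True # swap_obj Y, qC, [])]"
  by (simp add: rotm_def chq.simps nf)

lemma om_x: "Q (om xprime) = qX"
proof -
  have "Q (om xprime) = Q (om (rotm [] [] Gx))" by (simp add: rotm_inst)
  also have "\<dots> = chq [True] [([], qD, [True]), ([True], qx', [True]), ([True], qC, [])]"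
    by (subst Q_om_rot) simp_all
  also have "\<dots> = qX" using LR[of Gx "[]" "[]"] by (simp add: rotm_inst[symmetric])
  finally show ?thesis .
qed

lemma om_t: "Q (om tmor) = qsmul (-1) (Q tmor)"
proof -
  have "Q (om tmor) = Q (om (rotm [True] [True] Gs))" by (simp add: rotm_inst)
  also have "\<dots> = chq [True, False] [([], qD, [False, True]), ([True], qsmul (-1) qs', [True]), ([True, False], qC, [])]"
    by (subst Q_om_rot) simp_all
  also have "\<dots> = qsmul (-1) (chq [True, False] [([], qD, [False, True]), ([True], qs', [True]), ([True, False], qC, [])])"
    using chq_smul[of "[True, False]" "[([], qD, [False, True])]"] by simp
  also have "chq [True, False] [([], qD, [False, True]), ([True], qs', [True]), ([True, False], qC, [])] = Q tmor"
    using LR[of tmor "[False]" "[False]"] by (simp add: rotm_inst[symmetric])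
  then have "qsmul (-1) (chq [True, False] [([], qD, [False, True]), ([True], qs', [True]), ([True, False], qC, [])]) = qsmul (-1) (Q tmor)"
    by (rule arg_cong)
  finally show ?thesis .
qed

lemma om_s: "Q (om sprime) = qsmul (-1) qS"
proof -
  have "Q (om sprime) = Q (om (rotm [False] [False] tmor))" by (simp add: rotm_inst)
  also have "\<dots> = chq [True, True] [([], qD, [True, True]), ([True], Q (om tmor), [True]), ([True, True], qC, [])]"
    using om_ty[of 0 tmor] by (subst Q_om_rot) simp_all
  also have "\<dots> = qsmul (-1) (chq [True, True] [([], qD, [True, True]), ([True], Q tmor, [True]), ([True, True], qC, [])])"
    using chq_smul[of "[True, True]" "[([], qD, [True, True])]"] by (simp add: om_t)
  also have "chq [True, True] [([], qD, [True, True]), ([True], Q tmor, [True]), ([True, True], qC, [])] = qS"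
    using LR[of Gs "[True]" "[True]"] by (simp add: rotm_inst[symmetric])
  then have "qsmul (-1) (chq [True, True] [([], qD, [True, True]), ([True], Q tmor, [True]), ([True, True], qC, [])]) = qsmul (-1) qS"
    by (rule arg_cong)
  finally show ?thesis .
qed


lemma xprime_ch: "qx' = chq [False] [([False], qD, []), ([False], qX, [False]), ([], qC, [False])]"
  by (simp add: xprime_def chq.simps nf)

lemma slide1: "(qx' \<otimes> qid [True]) \<odot> qC = (qid [False] \<otimes> qX) \<odot> qC"
proof -
  have "(qx' \<otimes> qid [True]) \<odot> qC = chq [] [([], qx', [True]), ([], qC, [])]" by (simp add: chq.simps nf)
  also have "\<dots> = chq [] [([False], qD, [True]), ([False], qX, [False, True]), ([], qC, [False, True]), ([], qC, [])]"
    apply (subst expand[where i=0 and P="[]" and N="[True]" and c="[False]" and M="[([False], qD, []), ([False], qX, [False]), ([], qC, [False])]"])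
    apply (simp_all add: xprime_ch whisk_def)
    done
  also have "\<dots> = chq [] [([False], qX, []), ([], qC, [])]"
    apply (subst chq_swap_at[where dir=True and i=2], simp, simp, simp add: chs)
    apply (subst chq_swap_at[where dir=True and i=1], simp, simp, simp add: chs)
    apply (subst repl_at[OF zig zig_ty, where i=0 and P="[False]" and N="[]"], simp add: whisk_def, simp, simp add: whisk_def)
    done
  also have "\<dots> = (qid [False] \<otimes> qX) \<odot> qC" by (simp add: chq.simps nf)
  finally show ?thesis .
qed

lemma slide2: "qD \<odot> (qid [True] \<otimes> qx') = qD \<odot> (qX \<otimes> qid [False])"
proof -
  have "qD \<odot> (qid [True] \<otimes> qx') = chq [True, False] [([], qD, []), ([True], qx', [])]" by (simp add: chq.simps nf)
  also have "\<dots> = chq [True, False] [([], qD, []), ([True, False], qD, []), ([True, False], qX, [False]), ([True], qC, [False])]"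
    apply (subst expand[where i=1 and P="[True]" and N="[]" and c="[False]" and M="[([False], qD, []), ([False], qX, [False]), ([], qC, [False])]"])
    apply (simp_all add: xprime_ch whisk_def)
    done
  also have "\<dots> = chq [True, False] [([], qD, []), ([], qX, [False])]"
    apply (subst chq_swap_at[where dir=True and i=0], simp, simp, simp add: chs)
    apply (subst chq_swap_at[where dir=True and i=1], simp, simp, simp add: chs)
    apply (subst repl_at[OF zig zig_ty, where i=2 and P="[]" and N="[False]"], simp add: whisk_def, simp, simp add: whisk_def)
    done
  also have "\<dots> = qD \<odot> (qX \<otimes> qid [False])" by (simp add: chq.simps nf)
  finally show ?thesis .
qed

lemma comm_tens: "qty A = Some (a, a') \<Longrightarrow> qty B = Some (b, b') \<Longrightarrow>
  (A \<otimes> qid b') \<odot> (qid a \<otimes> B) = (qid a' \<otimes> B) \<odot> (A \<otimes> qid b)"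
  by (simp add: ichg idl idr qok_def qdom_def qcod_def)

lemma ty_Q_x: "qty qX = Some ([True], [True])" by simp

lemma ty_Q_x': "qty qx' = Some ([False], [False])" by simp

lemma ty_om_xpow: "ty m (om (xpow n)) = Some ([False], [False])"
  using om_ty[of "-m" "xpow n"] by simp

lemma om_dx: "(Q (om (dx r)) :: 'k::comm_ring_1 dg) = Q (cx r)"
proof -
  have "((Q (om (xpow n)) :: 'k dg) \<otimes> qid [True]) \<odot> qC = (qid [False] \<otimes> Q (xpow n)) \<odot> qC" for n
  proof (induction n)
    case 0 then show ?case by simp
  next
    case (Suc n)
    let ?A = "Q (om (xpow n)) :: 'k dg"
    have tA: "qty ?A = Some ([False], [False])" by (simp add: ty_om_xpow)
    have "(Q (om (xpow (Suc n))) \<otimes> qid [True]) \<odot> qC = (?A \<otimes> qid [True]) \<odot> ((qx' \<otimes> qid [True]) \<odot> qC)"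
      by (simp add: nf ty_om_xpow)
    also have "\<dots> = ((?A \<otimes> qid [True]) \<odot> (qid [False] \<otimes> qX)) \<odot> qC" by (simp add: slide1 qcomp_assoc)
    also have "\<dots> = ((qid [False] \<otimes> qX) \<odot> (?A \<otimes> qid [True])) \<odot> qC"
      by (rule arg_cong[OF comm_tens[OF tA ty_Q_x], where f="\<lambda>z. z \<odot> qC"])
    also have "\<dots> = (qid [False] \<otimes> qX) \<odot> ((qid [False] \<otimes> Q (xpow n)) \<odot> qC)" by (simp add: Suc qcomp_assoc)
    also have "\<dots> = (qid [False] \<otimes> Q (xpow (Suc n))) \<odot> qC" by (simp add: nf)
    finally show ?case .
  qed
  then show ?thesis by (simp add: dx_def cx_def)
qed

lemma om_cx: "(Q (om (cx r)) :: 'k::comm_ring_1 dg) = Q (dx r)"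
proof -
  have "qD \<odot> (qid [True] \<otimes> (Q (om (xpow n)) :: 'k dg)) = qD \<odot> (Q (xpow n) \<otimes> qid [False])" for n
  proof (induction n)
    case 0 then show ?case by (simp add: qtens_id)
  next
    case (Suc n)
    let ?A = "Q (om (xpow n)) :: 'k dg"
    have tA: "qty ?A = Some ([False], [False])" by (simp add: ty_om_xpow)
    have tP: "qty (Q (xpow n)) = Some ([True], [True])" by simp
    have "qD \<odot> (qid [True] \<otimes> Q (om (xpow (Suc n)))) = (qD \<odot> (qid [True] \<otimes> ?A)) \<odot> (qid [True] \<otimes> qx')"
      by (simp add: nf ty_om_xpow)
    also have "\<dots> = (qD \<odot> (Q (xpow n) \<otimes> qid [False])) \<odot> (qid [True] \<otimes> qx')"
      by (rule arg_cong[OF Suc.IH, where f="\<lambda>z. z \<odot> (qid [True] \<otimes> qx')"])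
    also have "\<dots> = qD \<odot> ((Q (xpow n) \<otimes> qid [False]) \<odot> (qid [True] \<otimes> qx'))" by (rule qcomp_assoc)
    also have "\<dots> = qD \<odot> ((qid [True] \<otimes> qx') \<odot> (Q (xpow n) \<otimes> qid [False]))" by (rule arg_cong[OF comm_tens[OF tP ty_Q_x'], where f="\<lambda>z. qD \<odot> z"])
    also have "\<dots> = (qD \<odot> (qX \<otimes> qid [False])) \<odot> (Q (xpow n) \<otimes> qid [False])" by (simp add: slide2 qcomp_assoc[symmetric])
    also have "\<dots> = qD \<odot> (Q (xpow (Suc n)) \<otimes> qid [False])" by (simp add: nf)
    finally show ?case .
  qed
  then show ?thesis by (simp add: dx_def cx_def)
qed


lemma om_om: "Q (om (om f)) = Q f"
  by (induction f) (simp_all add: om_x om_s qsmul_smul qsmul_one)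

lemma om_msum: "om (msum a b fs) = msum (swap_obj b) (swap_obj a) (map om fs)"
  by (induction fs) (simp_all add: msum_def)

lemma heq_msum: "(\<And>x. x \<in> set xs \<Longrightarrow> heq m (f x) (g x)) \<Longrightarrow> (\<And>x. x \<in> set xs \<Longrightarrow> ty m (f x) = Some (a, b))
  \<Longrightarrow> heq m (msum a b (map f xs)) (msum a b (map g xs))"
proof (induction xs)
  case Nil then show ?case by (simp add: msum_def heq_refl)
next
  case (Cons x xs)
  have "ty m (msum a b (map f xs)) = Some (a, b)" using Cons.prems by (intro ty_msum) auto
  then show ?case using Cons by (auto simp: msum_def hty_ty intro!: heq.cong_add)
qed

lemma ty_om_consts[simp]: "ty m (om tmor) = Some ([True, False], [False, True])"
  "ty m (om (dx r)) = Some ([], [False, True])" "ty m (om (cx r)) = Some ([True, False], [])"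
  using om_ty[of "-m" tmor] om_ty[of "-m" "dx r"] om_ty[of "-m" "cx r"] by simp_all

lemma Q_heq: "Q f = Q g \<Longrightarrow> ty m f \<noteq> None \<Longrightarrow> heq m f g" by (rule Q_eq_heq)

lemma qsmul_zer: "qsmul (-1) (qzer a b) = qzer a b"
proof -
  have n: "qzer a b \<boxplus> qsmul (-1) (qzer a b) = qzer a b" by (rule qadd_neg) simp
  have "qzer a b = qzer a b \<boxplus> qsmul (-1) (qzer a b)" using n by (rule sym)
  also have "\<dots> = qsmul (-1) (qzer a b) \<boxplus> qzer a b" by (rule qadd_comm)
  also have "\<dots> = qsmul (-1) (qzer a b)" by (rule qadd_zero) simp
  finally show ?thesis by (rule sym)
qed



lemma dot1: "qsmul (-1) (qs' \<odot> (qx' \<otimes> qid [False])) \<boxplus> ((qid [False] \<otimes> qx') \<odot> qs') = qid [False, False]"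
proof -
  have ss2: "qs' \<odot> (qs' \<odot> Z) = Z" if "qty Z = Some (a, [False, False])" for Z :: "'k::comm_ring_1 dg" and a
    using that by (simp add: qcomp_assoc[symmetric] ss' idl qok_def qcod_def)
  have "qs' \<odot> (((qs' \<odot> (qid [False] \<otimes> qx')) \<boxplus> qsmul (-1) ((qx' \<otimes> qid [False]) \<odot> qs')) \<odot> qs')
      = qs' \<odot> (qid [False, False] \<odot> qs')" by (simp only: dot0)
  then have "((qid [False] \<otimes> qx') \<odot> qs') \<boxplus> qsmul (-1) (qs' \<odot> (qx' \<otimes> qid [False])) = qid [False, False]"
    by (simp add: qcomp_addl qcomp_addr qcomp_smull qcomp_smulr qcomp_assoc ss2 ss' idl idr qok_def qcod_def qdom_def)
  then show ?thesis by (simp add: qadd_comm)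
qed

lemma QI1: "Q (Comp (om tmor) (Smul (-1) Gu)) = Q (Comp tmor Gu)"
  by (simp add: om_t nf)
lemma QI2: "Q (Comp (Smul (-1) Gu) (om tmor)) = Q (Comp Gu tmor)"
  by (simp add: om_t nf)
lemma QI3: "Q (Comp (Gv r) (om tmor)) = Q (Smul (-1) (Comp (Gv r) tmor))"
  by (simp add: om_t nf)
lemma QI3': "Q (Comp (om tmor) (Gv r)) = Q (Smul (-1) (Comp tmor (Gv r)))"
  by (simp add: om_t nf)
lemma QI4: "Q (Comp (Smul (-1) Gu) (om (dx r))) = Q (Smul (-1) (Comp Gu (cx r)))"
  by (simp add: om_dx nf)
lemma QI4': "Q (Comp (om (cx r)) (Smul (-1) Gu)) = Q (Smul (-1) (Comp (dx r) Gu))"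
  by (simp add: om_cx nf)
lemma QI5: "Q (Comp (om (dx r)) (Gv q)) = Q (Comp (cx r) (Gv q))"
  by (simp add: om_dx)
lemma QI5': "Q (Comp (Gv q) (om (cx r))) = Q (Comp (Gv q) (dx r))"
  by (simp add: om_cx)
lemma Qz: "Q (Smul (-1) (Zer a b)) = Q (Zer a b)"
  using qsmul_zer by simp

declare heq.eq_trans[trans]

lemma om_heq: "heq m f g \<Longrightarrow> heq (- m) (om f) (om g)"
proof (induction rule: heq.induct)
  case (eq_refl f a b) then show ?case using om_hty by (blast intro: heq.eq_refl)
next
  case (eq_sym f g) show ?case by (rule heq.eq_sym[OF eq_sym.IH])
next
  case (eq_trans f g h) then show ?case by (blast intro: heq.eq_trans)
next
  case (cong_comp f f' g g' b c a) then show ?case by (auto intro!: heq.cong_comp om_hty)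
next
  case (cong_tens f f' g g') then show ?case by (auto intro!: heq.cong_tens)
next
  case (cong_add f f' g g' a b) then show ?case by (auto intro!: heq.cong_add om_hty)
next
  case (cong_smul f f' r) then show ?case by (auto intro!: heq.cong_smul)
next
  case (comp_assoc f c d g b h a) then show ?case by (auto intro!: heq.eq_sym[OF heq.comp_assoc] om_hty)
next
  case (comp_idl f a b) then show ?case by (auto intro!: heq.comp_idr om_hty)
next
  case (comp_idr f a b) then show ?case by (auto intro!: heq.comp_idl om_hty)
next
  case (tens_assoc f a b g c d h e p) then show ?case by (auto intro!: heq.tens_assoc om_hty)
next
  case (tens_unitl f a b) then show ?case using heq.tens_unitl[OF om_hty[OF tens_unitl]] by simp
next
  case (tens_unitr f a b) then show ?case using heq.tens_unitr[OF om_hty[OF tens_unitr]] by simp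
next
  case (tens_id a b) then show ?case using heq.tens_id[of "- m" "swap_obj a" "swap_obj b"] by simp
next
  case (interchange f a b g c h d e k p) then show ?case by (auto intro!: heq.interchange om_hty)
next
  case (add_assoc f a b g h) then show ?case by (auto intro!: heq.add_assoc om_hty)
next
  case (add_comm f a b g) then show ?case by (auto intro!: heq.add_comm om_hty)
next
  case (add_zero f a b) then show ?case by (auto intro!: heq.add_zero om_hty)
next
  case (add_neg f a b) then show ?case by (auto intro!: heq.add_neg om_hty)
next
  case (smul_add f a b g r) then show ?case by (auto intro!: heq.smul_add om_hty)
next
  case (add_smul f a b r q) then show ?case by (auto intro!: heq.add_smul om_hty)
next
  case (smul_smul f a b r q) then show ?case by (auto intro!: heq.smul_smul om_hty)
next
  case (smul_one f a b) then show ?case by (auto intro!: heq.smul_one om_hty)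
next
  case (comp_addl f b c g h a) then show ?case by (auto intro!: heq.comp_addr om_hty)
next
  case (comp_addr f b c g a h) then show ?case by (auto intro!: heq.comp_addl om_hty)
next
  case (comp_smull f b c g a r) then show ?case by (auto intro!: heq.comp_smulr om_hty)
next
  case (comp_smulr f b c g a r) then show ?case by (auto intro!: heq.comp_smull om_hty)
next
  case (tens_addl f a b g h c d) then show ?case by (auto intro!: heq.tens_addl om_hty)
next
  case (tens_addr f a b g c d h) then show ?case by (auto intro!: heq.tens_addr om_hty)
next
  case (tens_smull f a b g c d r) then show ?case by (auto intro!: heq.tens_smull om_hty)
next
  case (tens_smulr f a b g c d r) then show ?case by (auto intro!: heq.tens_smulr om_hty)
next
  case H_ss
  show ?case by (rule Q_heq) (simp_all add: nf ss')
next
  case H_braid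
  show ?case
  proof (rule Q_heq)
    show "ty (- m) (om (Comp (Tens Gs (Id [True])) (Comp (Tens (Id [True]) Gs) (Tens Gs (Id [True]))))) \<noteq> None" by simp
    have "Q (om (Comp (Tens Gs (Id [True])) (Comp (Tens (Id [True]) Gs) (Tens Gs (Id [True])))))
      = qsmul (-1) ((qs' \<otimes> qid [False]) \<odot> (qid [False] \<otimes> qs') \<odot> (qs' \<otimes> qid [False]))"
      by (simp add: nf)
    also have "\<dots> = qsmul (-1) ((qid [False] \<otimes> qs') \<odot> (qs' \<otimes> qid [False]) \<odot> (qid [False] \<otimes> qs'))"
      by (simp only: braid')
    also have "\<dots> = Q (om (Comp (Tens (Id [True]) Gs) (Comp (Tens Gs (Id [True])) (Tens (Id [True]) Gs))))"
      by (simp add: nf)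
    finally show "Q (om (Comp (Tens Gs (Id [True])) (Comp (Tens (Id [True]) Gs) (Tens Gs (Id [True])))))
      = Q (om (Comp (Tens (Id [True]) Gs) (Comp (Tens Gs (Id [True])) (Tens (Id [True]) Gs))))" .
  qed
next
  case H_dot
  show ?case
  proof (rule Q_heq)
    show "ty (- m) (om (Add (Comp (Tens Gx (Id [True])) Gs) (Smul (-1) (Comp Gs (Tens (Id [True]) Gx))))) \<noteq> None" by simp
    have "Q (om (Add (Comp (Tens Gx (Id [True])) Gs) (Smul (-1) (Comp Gs (Tens (Id [True]) Gx)))))
      = qsmul (-1) (qs' \<odot> (qx' \<otimes> qid [False])) \<boxplus> ((qid [False] \<otimes> qx') \<odot> qs')"
      by (simp add: nf)
    also have "\<dots> = qid [False, False]" by (rule dot1)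
    finally show "Q (om (Add (Comp (Tens Gx (Id [True])) Gs) (Smul (-1) (Comp Gs (Tens (Id [True]) Gx)))))
      = Q (om (Id [True, True]))" by simp
  qed
next
  case A_up
  show ?case using heq.A_down[of "-m"] by simp
next
  case A_down
  show ?case using heq.A_up[of "-m"] by simp
next
  case I_pos1
  show ?case
  proof (cases "m = 0")
    case True
    have "heq 0 (om (Add (Comp Gu tmor) (msum [True, False] [True, False] (map (\<lambda>r. Comp (Gv r) (dx r)) [0..<nat m]))))
      (Comp tmor Gu)"
      by (rule Q_heq) (simp_all add: True msum_def om_t nf qadd_zero)
    also have "heq 0 (Comp tmor Gu) (Id [False, True])" by (rule heq.I_pos2) simp
    finally show ?thesis using True by simp
  next
    case False
    then have mpos: "- m < 0" using I_pos1 by simp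
    have A: "heq (- m) (Comp (om tmor) (Smul (-1) Gu)) (Comp tmor Gu)"
      by (rule Q_heq[OF QI1]) simp
    have B: "heq (- m) (msum [False, True] [False, True] (map (\<lambda>r. Comp (om (dx r)) (Gv r)) [0..<nat m]))
       (msum [False, True] [False, True] (map (\<lambda>r. Comp (cx r) (Gv r)) [0..<nat m]))"
      by (rule heq_msum, rule Q_heq[OF QI5]) (use mpos in simp_all)
    have C: "heq (- m) (Add (Comp tmor Gu) (msum [False, True] [False, True] (map (\<lambda>r. Comp (cx r) (Gv r)) [0..<nat m])))
        (Id [False, True])"
      using heq.I_neg1[OF mpos] by simp
    have D: "ty (- m) (msum [False, True] [False, True] (map (\<lambda>r. Comp (om (dx r)) (Gv r)) [0..<nat m])) = Some ([False, True], [False, True])"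
      using mpos by (intro ty_msum) auto
    have "heq (- m) (Add (Comp (om tmor) (Smul (-1) Gu)) (msum [False, True] [False, True] (map (\<lambda>r. Comp (om (dx r)) (Gv r)) [0..<nat m])))
      (Add (Comp tmor Gu) (msum [False, True] [False, True] (map (\<lambda>r. Comp (cx r) (Gv r)) [0..<nat m])))"
      using A B D by (intro heq.cong_add) (auto simp: hty_ty)
    from heq.eq_trans[OF this C] show ?thesis by (simp add: om_msum comp_def)
  qed
next
  case I_pos2
  show ?case
  proof (cases "m = 0")
    case True
    have "heq 0 (Comp (Smul (-1) Gu) (om tmor)) (Add (Comp Gu tmor) (msum [True, False] [True, False] (map (\<lambda>r. Comp (Gv r) (dx r)) [0..<nat 0])))"
      by (rule Q_heq) (simp_all add: msum_def om_t nf qadd_zero)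
    also have "heq 0 (Add (Comp Gu tmor) (msum [True, False] [True, False] (map (\<lambda>r. Comp (Gv r) (dx r)) [0..<nat 0]))) (Id [True, False])"
      by (rule heq.I_pos1) simp
    finally show ?thesis using True by simp
  next
    case False
    then have mpos: "- m < 0" using I_pos2 by simp
    have "heq (- m) (Comp (Smul (-1) Gu) (om tmor)) (Comp Gu tmor)" by (rule Q_heq[OF QI2]) simp
    also have "heq (- m) (Comp Gu tmor) (Id [True, False])" by (rule heq.I_neg2[OF mpos])
    finally show ?thesis by simp
  qed
next
  case (I_pos3 r)
  then have mpos: "- m < 0" and r: "int r < - (- m)" by simp_all
  have "heq (- m) (Comp (Gv r) (om tmor)) (Smul (-1) (Comp (Gv r) tmor))"
    by (rule Q_heq[OF QI3]) (use mpos r in simp)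
  also have "heq (- m) (Smul (-1) (Comp (Gv r) tmor)) (Smul (-1) (Zer [True, False] []))"
    by (rule heq.cong_smul, rule heq.I_neg4[OF mpos r])
  also have "heq (- m) (Smul (-1) (Zer [True, False] [])) (Zer [True, False] [])"
    by (rule Q_heq[OF Qz]) simp
  finally show ?case by simp
next
  case (I_pos4 r)
  then have mpos: "- m < 0" and r: "int r < - (- m)" by simp_all
  have "heq (- m) (Comp (Smul (-1) Gu) (om (dx r))) (Smul (-1) (Comp Gu (cx r)))"
    by (rule Q_heq[OF QI4]) simp
  also have "heq (- m) (Smul (-1) (Comp Gu (cx r))) (Smul (-1) (Zer [] [True, False]))"
    by (rule heq.cong_smul, rule heq.I_neg3[OF mpos r])
  also have "heq (- m) (Smul (-1) (Zer [] [True, False])) (Zer [] [True, False])"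
    by (rule Q_heq[OF Qz]) simp
  finally show ?case by simp
next
  case (I_pos5 r q)
  then have mpos: "- m < 0" and r: "int r < - (- m)" and q: "int q < - (- m)" by simp_all
  have "heq (- m) (Comp (Gv q) (om (dx r))) (Comp (Gv q) (cx r))"
    by (rule Q_heq) (use mpos q in \<open>simp_all add: om_dx\<close>)
  also have "heq (- m) (Comp (Gv q) (cx r)) (if q = r then Id [] else Zer [] [])"
    by (rule heq.I_neg5[OF mpos q r])
  finally show ?case by (cases "r = q") auto
next
  case I_neg1
  then have mpos: "0 \<le> - m" by simp
  have A: "heq (- m) (Comp (Smul (-1) Gu) (om tmor)) (Comp Gu tmor)"
    by (rule Q_heq[OF QI2]) simp
  have B: "heq (- m) (msum [True, False] [True, False] (map (\<lambda>r. Comp (Gv r) (om (cx r))) [0..<nat (- m)]))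
     (msum [True, False] [True, False] (map (\<lambda>r. Comp (Gv r) (dx r)) [0..<nat (- m)]))"
    by (rule heq_msum, rule Q_heq[OF QI5']) (use I_neg1 in simp_all)
  have C: "heq (- m) (Add (Comp Gu tmor) (msum [True, False] [True, False] (map (\<lambda>r. Comp (Gv r) (dx r)) [0..<nat (- m)])))
      (Id [True, False])"
    using heq.I_pos1[OF mpos] by simp
  have D: "ty (- m) (msum [True, False] [True, False] (map (\<lambda>r. Comp (Gv r) (om (cx r))) [0..<nat (- m)])) = Some ([True, False], [True, False])"
    using I_neg1 by (intro ty_msum) auto
  have "heq (- m) (Add (Comp (Smul (-1) Gu) (om tmor)) (msum [True, False] [True, False] (map (\<lambda>r. Comp (Gv r) (om (cx r))) [0..<nat (- m)])))
    (Add (Comp Gu tmor) (msum [True, False] [True, False] (map (\<lambda>r. Comp (Gv r) (dx r)) [0..<nat (- m)])))"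
    using A B D by (intro heq.cong_add) (auto simp: hty_ty)
  from heq.eq_trans[OF this C] show ?case by (simp add: om_msum comp_def)
next
  case I_neg2
  then have mpos: "0 \<le> - m" by simp
  have "heq (- m) (Comp (om tmor) (Smul (-1) Gu)) (Comp tmor Gu)" by (rule Q_heq[OF QI1]) simp
  also have "heq (- m) (Comp tmor Gu) (Id [False, True])" by (rule heq.I_pos2[OF mpos])
  finally show ?case by simp
next
  case (I_neg3 r)
  then have mpos: "0 \<le> - m" and r: "int r < - m" by simp_all
  have "heq (- m) (Comp (om (cx r)) (Smul (-1) Gu)) (Smul (-1) (Comp (dx r) Gu))"
    by (rule Q_heq[OF QI4']) simp
  also have "heq (- m) (Smul (-1) (Comp (dx r) Gu)) (Smul (-1) (Zer [False, True] []))"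
    by (rule heq.cong_smul, rule heq.I_pos4[OF mpos r])
  also have "heq (- m) (Smul (-1) (Zer [False, True] [])) (Zer [False, True] [])"
    by (rule Q_heq[OF Qz]) simp
  finally show ?case by simp
next
  case (I_neg4 r)
  then have mpos: "0 \<le> - m" and r: "int r < - m" by simp_all
  have "heq (- m) (Comp (om tmor) (Gv r)) (Smul (-1) (Comp tmor (Gv r)))"
    by (rule Q_heq[OF QI3']) (use mpos r in simp)
  also have "heq (- m) (Smul (-1) (Comp tmor (Gv r))) (Smul (-1) (Zer [] [False, True]))"
    by (rule heq.cong_smul, rule heq.I_pos3[OF mpos r])
  also have "heq (- m) (Smul (-1) (Zer [] [False, True])) (Zer [] [False, True])"
    by (rule Q_heq[OF Qz]) simp
  finally show ?case by simp
next
  case (I_neg5 r q)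
  then have mpos: "0 \<le> - m" and r: "int r < - m" and q: "int q < - m" by simp_all
  have "heq (- m) (Comp (om (cx q)) (Gv r)) (Comp (dx q) (Gv r))"
    by (rule Q_heq) (use mpos r in \<open>simp_all add: om_cx\<close>)
  also have "heq (- m) (Comp (dx q) (Gv r)) (if q = r then Id [] else Zer [] [])"
    by (rule heq.I_pos5[OF mpos q r])
  finally show ?case by (cases "r = q") auto
qed


lemma om_om_heq: "hty m f a b \<Longrightarrow> heq m (om (om f)) f"
proof -
  assume h: "hty m f a b"
  have "ty m (om (om f)) = Some (a, b)"
    using om_ty[OF om_ty[OF h[unfolded hty_ty]]] by simp
  then show ?thesis by (intro Q_heq[OF om_om]) simp
qed

theorem lemma2p1:
  fixes k :: int
  shows "\<exists>w :: 'k::comm_ring_1 mor \<Rightarrow> 'k mor.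
           heis_op_iso k (- k) w
         \<and> heq (- k) (w Gx) xprime
         \<and> heq (- k) (w Gs) (Smul (-1) sprime)
         \<and> heq (- k) (w Gc) Gd
         \<and> heq (- k) (w Gd) Gc"
proof (intro exI[of _ om] conjI)
  show "heq (- k) (om Gx) xprime" by (simp add: heq_refl)
  show "heq (- k) (om Gs) (Smul (-1) sprime)" by (simp add: heq_refl)
  show "heq (- k) (om Gc) Gd" by (simp add: heq_refl)
  show "heq (- k) (om Gd) Gc" by (simp add: heq_refl)
  show "heis_op_iso k (- k) (om :: 'k mor \<Rightarrow> 'k mor)"
    unfolding heis_op_iso_def
  proof (intro conjI allI impI)
    fix f :: "'k mor" and a b assume "hty k f a b"
    then show "hty (- k) (om f) (swap_obj b) (swap_obj a)" by (rule om_hty)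
  next
    fix f g :: "'k mor" assume "heq k f g"
    then show "heq (- k) (om f) (om g)" by (rule om_heq)
  next
    fix a show "heq (- k) (om (Id a)) (Id (swap_obj a))" by (simp add: heq_refl)
  next
    fix f g :: "'k mor" and a b c assume "hty k f b c" "hty k g a b"
    then show "heq (- k) (om (Comp f g)) (Comp (om g) (om f))"
      using om_ty[of k f] om_ty[of k g] by (auto intro!: heq_refl simp: hty_ty)
  next
    fix f g :: "'k mor" and a b c d assume "hty k f a b" "hty k g c d"
    then show "heq (- k) (om (Tens f g)) (Tens (om f) (om g))"
      using om_ty[of k f] om_ty[of k g] by (auto intro!: heq_refl simp: hty_ty)
  next
    fix f g :: "'k mor" and a b assume "hty k f a b" "hty k g a b"
    then show "heq (- k) (om (Add f g)) (Add (om f) (om g))"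
      using om_ty[of k f] om_ty[of k g] by (auto intro!: heq_refl simp: hty_ty)
  next
    fix f :: "'k mor" and r a b assume "hty k f a b"
    then show "heq (- k) (om (Smul r f)) (Smul r (om f))"
      using om_ty[of k f] by (auto intro!: heq_refl simp: hty_ty)
  next
    fix f g :: "'k mor" and a b assume f: "hty k f a b" and g: "hty k g a b" and e: "heq (- k) (om f) (om g)"
    have "heq (- (- k)) (om (om f)) (om (om g))" using om_heq[OF e] .
    then have "heq k (om (om f)) (om (om g))" by simp
    then show "heq k f g"
      using om_om_heq[OF f] om_om_heq[OF g] by (meson heq.eq_sym heq.eq_trans)
  next
    fix h :: "'k mor" and a b assume h: "hty (- k) h (swap_obj b) (swap_obj a)"
    show "\<exists>f. hty k f a b \<and> heq (- k) (om f) h"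
    proof (intro exI conjI)
      show "hty k (om h) a b" using om_hty[OF h] by simp
      show "heq (- k) (om (om h)) h" by (rule om_om_heq[OF h])
    qed
  qed
qed



end
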